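(* As classes of circuit families (compared by the unitaries they implement), $\mathsf{A}^{\mathsf{CQ}}_1 \not\subseteq \mathsf{A}^{\mathsf{QC}}_1$ and $\mathsf{A}^{\mathsf{QC}}_1 \not\subseteq \mathsf{A}^{\mathsf{CQ}}_1$.
   Context: $\mathsf{QNC}^0$ denotes families of $n$-qubit circuits of constant depth (independent of $n$) built from arbitrary two-qubit gates acting on any pair of qubits (no geometric locality). A Clifford circuit is an arbitrary-size circuit of Clifford gates. $\mathsf{A}^{\mathsf{CQ}}_k$ is the class of circuit families $\{C_n\}$ for which there is a constant $d$ such that each $C_n$ acts on $n$ qubits and equals a product of $k+1$ circuits alternating between Clifford circuits and depth-$d$ two-qubit-gate circuits, with the first circuit applied being a Clifford circuit; $\mathsf{A}^{\mathsf{QC}}_k$ is defined the same way but with the first circuit applied being a depth-$d$ (i.e. $\mathsf{QNC}^0$) circuit. Thus $\mathsf{A}^{\mathsf{CQ}}_1$ consists of a Clifford circuit followed by a $\mathsf{QNC}^0$ circuit, and $\mathsf{A}^{\mathsf{QC}}_1$ of a $\mathsf{QNC}^0$ circuit followed by a Clifford circuit. *)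

theory Defs
  imports Complex_Main "Jordan_Normal_Form.Matrix"
begin

text \<open>Quantum circuits on n qubits as complex 2^n x 2^n matrices. The computational
basis state |x> with x < 2^n has qubit i equal to bit i of x.\<close>

definition cadj :: "complex mat \<Rightarrow> complex mat" where
  "cadj U = mat (dim_col U) (dim_row U) (\<lambda>(i,j). cnj (U $$ (j,i)))"

definition unitary_mat :: "nat \<Rightarrow> complex mat \<Rightarrow> bool" where
  "unitary_mat m U \<longleftrightarrow> U \<in> carrier_mat m m \<and> U * cadj U = 1\<^sub>m m"

definition local_index :: "nat list \<Rightarrow> nat \<Rightarrow> nat" where
  "local_index qs x = (\<Sum>j<length qs. (if bit x (qs!j) then 1 else 0) * 2^j)"

text \<open>Embedding of a gate U (a 2^k x 2^k matrix) acting on the distinct qubits qs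
(length k) into the n-qubit space, tensored with the identity on the other qubits.\<close>
definition embed_gate :: "nat \<Rightarrow> nat list \<Rightarrow> complex mat \<Rightarrow> complex mat" where
  "embed_gate n qs U = mat (2^n) (2^n) (\<lambda>(x,y).
     if (\<forall>i<n. i \<notin> set qs \<longrightarrow> bit x i = bit y i)
     then U $$ (local_index qs x, local_index qs y) else 0)"

definition valid_support :: "nat \<Rightarrow> nat list \<Rightarrow> bool" where
  "valid_support n qs \<longleftrightarrow> distinct qs \<and> set qs \<subseteq> {..<n}"

definition hadamard :: "complex mat" where
  "hadamard = mat 2 2 (\<lambda>(i,j). if i = 1 \<and> j = 1 then - 1 / sqrt 2 else 1 / sqrt 2)"

definition phase_S :: "complex mat" where
  "phase_S = mat 2 2 (\<lambda>(i,j). if i = j then (if i = 0 then 1 else \<i>) else 0)"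

text \<open>Local index = bit(control) + 2*bit(target); CNOT flips the target iff control is 1.\<close>
definition cnot :: "complex mat" where
  "cnot = mat 4 4 (\<lambda>(i,j). if i = (if odd j then (j + 2) mod 4 else j) then 1 else 0)"

definition clifford_gate :: "nat \<Rightarrow> complex mat \<Rightarrow> bool" where
  "clifford_gate n G \<longleftrightarrow>
     (\<exists>a<n. G = embed_gate n [a] hadamard \<or> G = embed_gate n [a] phase_S) \<or>
     (\<exists>a<n. \<exists>b<n. a \<noteq> b \<and> G = embed_gate n [a, b] cnot)"

inductive clifford_circuit :: "nat \<Rightarrow> complex mat \<Rightarrow> bool" for n where
  cc_id: "clifford_circuit n (1\<^sub>m (2^n))"
| cc_step: "clifford_circuit n C \<Longrightarrow> clifford_gate n G \<Longrightarrow> clifford_circuit n (G * C)"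

inductive layer :: "nat \<Rightarrow> nat set \<Rightarrow> complex mat \<Rightarrow> bool" for n where
  layer_empty: "layer n {} (1\<^sub>m (2^n))"
| layer_gate: "layer n S L \<Longrightarrow> valid_support n qs \<Longrightarrow> 1 \<le> length qs \<Longrightarrow> length qs \<le> 2 \<Longrightarrow>
     set qs \<inter> S = {} \<Longrightarrow> unitary_mat (2 ^ length qs) U \<Longrightarrow>
     layer n (S \<union> set qs) (embed_gate n qs U * L)"

fun depth_circuit :: "nat \<Rightarrow> nat \<Rightarrow> complex mat \<Rightarrow> bool" where
  "depth_circuit n 0 Q \<longleftrightarrow> Q = 1\<^sub>m (2^n)"
| "depth_circuit n (Suc d) Q \<longleftrightarrow> (\<exists>S L Q'. layer n S L \<and> depth_circuit n d Q' \<and> Q = L * Q')"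

definition A_CQ_1 :: "(nat \<Rightarrow> complex mat) set" where
  "A_CQ_1 = {F. \<exists>d. \<forall>n. \<exists>C Q. clifford_circuit n C \<and> depth_circuit n d Q \<and> F n = Q * C}"

definition A_QC_1 :: "(nat \<Rightarrow> complex mat) set" where
  "A_QC_1 = {F. \<exists>d. \<forall>n. \<exists>C Q. clifford_circuit n C \<and> depth_circuit n d Q \<and> F n = C * Q}"

end

theory Submission
  imports Defs "Jordan_Normal_Form.Determinant"
begin

unbundle bit_operations_syntax


lemma lt_pow_nbit: "(x::nat) < 2^n \<Longrightarrow> n \<le> j \<Longrightarrow> \<not> bit x j"
  by (metis bit_take_bit_iff not_le take_bit_nat_eq_self_iff)

lemma nbit_lt_pow: "(\<forall>j\<ge>n. \<not> bit (x::nat) j) \<Longrightarrow> x < 2^n"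
  by (metis bit_take_bit_iff bit_eqI not_le take_bit_nat_eq_self_iff)

lemma eq_by_bits: "(x::nat) < 2^n \<Longrightarrow> y < 2^n \<Longrightarrow> (\<forall>j<n. bit x j = bit y j) \<Longrightarrow> x = y"
  by (metis bit_eqI lt_pow_nbit not_le)

lemma xor_lt: "(x::nat) < 2^n \<Longrightarrow> y < 2^n \<Longrightarrow> x XOR y < 2^n"
  by (rule nbit_lt_pow) (auto simp: bit_xor_iff lt_pow_nbit)

lemma local_index_hs: "local_index qs x = horner_sum of_bool 2 (map (bit x) qs)"
  unfolding local_index_def horner_sum_eq_sum atLeast0LessThan
  by (rule sum.cong) auto

lemma bit_local_index: "bit (local_index qs x) i \<longleftrightarrow> i < length qs \<and> bit x (qs!i)"
  unfolding local_index_hs by (auto simp add: bit_horner_sum_bit_iff)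

lemma local_index_lt: "local_index qs x < 2 ^ length qs"
  unfolding local_index_hs using horner_sum_bound[of "map (bit x) qs"] by simp

definition agree :: "nat \<Rightarrow> nat list \<Rightarrow> nat \<Rightarrow> nat \<Rightarrow> bool" where
  "agree n qs x y \<longleftrightarrow> (\<forall>i<n. i \<notin> set qs \<longrightarrow> bit x i = bit y i)"

lemma agree_sym: "agree n qs x y \<Longrightarrow> agree n qs y x" by (auto simp: agree_def)
lemma agree_trans: "agree n qs x y \<Longrightarrow> agree n qs y z \<Longrightarrow> agree n qs x z" by (auto simp: agree_def)

lemma embed_carrier[simp]: "embed_gate n qs U \<in> carrier_mat (2^n) (2^n)"
  by (simp add: embed_gate_def)
lemma embed_dims[simp]: "dim_row (embed_gate n qs U) = 2^n" "dim_col (embed_gate n qs U) = 2^n"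
  by (simp_all add: embed_gate_def)

lemma embed_index: "x < 2^n \<Longrightarrow> y < 2^n \<Longrightarrow> embed_gate n qs U $$ (x,y) =
   (if agree n qs x y then U $$ (local_index qs x, local_index qs y) else 0)"
  by (simp add: embed_gate_def agree_def)

lemma mult_entry: "A \<in> carrier_mat m k \<Longrightarrow> B \<in> carrier_mat k l \<Longrightarrow> i < m \<Longrightarrow> j < l \<Longrightarrow>
   (A * B) $$ (i,j) = (\<Sum>z<k. A $$ (i,z) * B $$ (z,j))"
  by (auto simp: index_mult_mat scalar_prod_def atLeast0LessThan intro!: sum.cong)

fun idx :: "nat list \<Rightarrow> nat \<Rightarrow> nat" where
  "idx [] i = 0"
| "idx (q # qs) i = (if q = i then 0 else Suc (idx qs i))"

lemma idx_nth: "i \<in> set qs \<Longrightarrow> qs ! idx qs i = i"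
  by (induction qs) auto

lemma idx_lt: "i \<in> set qs \<Longrightarrow> idx qs i < length qs"
  by (induction qs) auto

lemma nth_idx: "distinct qs \<Longrightarrow> j < length qs \<Longrightarrow> idx qs (qs ! j) = j"
proof (induction qs arbitrary: j)
  case (Cons q qs)
  then show ?case by (cases j) (auto simp: nth_mem)
qed simp

definition place :: "nat \<Rightarrow> nat list \<Rightarrow> nat \<Rightarrow> nat \<Rightarrow> nat" where
  "place n qs k x = horner_sum of_bool 2 (map (\<lambda>i. if i \<in> set qs then bit k (idx qs i) else bit x i) [0..<n])"

lemma bit_place: "bit (place n qs k x) i \<longleftrightarrow> i < n \<and> (if i \<in> set qs then bit k (idx qs i) else bit x i)"
  unfolding place_def by (auto simp: bit_horner_sum_bit_iff)

lemma place_lt: "place n qs k x < 2^n"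
  unfolding place_def using horner_sum_bound[of "map (\<lambda>i. if i \<in> set qs then bit k (idx qs i) else bit x i) [0..<n]"]
  by simp

lemma li_place: assumes "valid_support n qs" "k < 2 ^ length qs"
  shows "local_index qs (place n qs k x) = k"
proof (rule eq_by_bits[OF local_index_lt assms(2)], intro allI impI)
  fix j assume j: "j < length qs"
  have "qs ! j \<in> set qs" using j by simp
  moreover hence "qs ! j < n" using assms(1) by (auto simp: valid_support_def)
  moreover have "idx qs (qs ! j) = j" using assms(1) j by (simp add: valid_support_def nth_idx)
  ultimately show "bit (local_index qs (place n qs k x)) j = bit k j"
    using j by (simp add: bit_local_index bit_place)
qed

lemma agree_place: "agree n qs x (place n qs k x)"
  by (simp add: agree_def bit_place)

lemma place_li: assumes "valid_support n qs" "z < 2^n" "agree n qs x z"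
  shows "place n qs (local_index qs z) x = z"
proof (rule eq_by_bits[OF place_lt assms(2)], intro allI impI)
  fix i assume i: "i < n"
  show "bit (place n qs (local_index qs z) x) i = bit z i"
  proof (cases "i \<in> set qs")
    case True
    then show ?thesis using i by (simp add: bit_place bit_local_index idx_lt idx_nth)
  next
    case False
    then show ?thesis using i assms(3) by (simp add: bit_place agree_def)
  qed
qed

lemma embed_mult: assumes vs: "valid_support n qs" and U: "U \<in> carrier_mat (2^length qs) (2^length qs)"
  and V: "V \<in> carrier_mat (2^length qs) (2^length qs)"
  shows "embed_gate n qs U * embed_gate n qs V = embed_gate n qs (U * V)"
proof (rule eq_matI)
  fix x y assume x: "x < dim_row (embed_gate n qs (U * V))" and y: "y < dim_col (embed_gate n qs (U * V))"
  hence x: "x < 2^n" and y: "y < 2^n" by auto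
  let ?L = "2 ^ length qs"
  have "(embed_gate n qs U * embed_gate n qs V) $$ (x,y) =
     (\<Sum>z<2^n. embed_gate n qs U $$ (x,z) * embed_gate n qs V $$ (z,y))"
    using x y by (intro mult_entry[of _ "2^n" "2^n" _ "2^n"]) auto
  also have "\<dots> = embed_gate n qs (U * V) $$ (x,y)"
  proof (cases "agree n qs x y")
    case False
    have "embed_gate n qs U $$ (x,z) * embed_gate n qs V $$ (z,y) = 0" if "z < 2^n" for z
      using that x y False agree_trans[of n qs x z y] by (auto simp: embed_index)
    then show ?thesis using False x y by (simp add: embed_index del: mult_eq_0_iff)
  next
    case True
    have "(\<Sum>z<2^n. embed_gate n qs U $$ (x,z) * embed_gate n qs V $$ (z,y)) =
          (\<Sum>z\<in>{z. z < 2^n \<and> agree n qs x z}. U $$ (local_index qs x, local_index qs z) * V $$ (local_index qs z, local_index qs y))"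
    proof (rule sum.mono_neutral_cong_right)
      show "finite {..<2 ^ n::nat}" by simp
      show "{z. z < 2 ^ n \<and> agree n qs x z} \<subseteq> {..<2 ^ n}" by auto
      show "\<forall>i\<in>{..<2 ^ n} - {z. z < 2 ^ n \<and> agree n qs x z}.
        embed_gate n qs U $$ (x, i) * embed_gate n qs V $$ (i, y) = 0"
        using x by (auto simp: embed_index)
      show "\<And>z. z \<in> {z. z < 2 ^ n \<and> agree n qs x z} \<Longrightarrow>
         embed_gate n qs U $$ (x, z) * embed_gate n qs V $$ (z, y) =
         U $$ (local_index qs x, local_index qs z) * V $$ (local_index qs z, local_index qs y)"
        using x y True by (auto simp: embed_index intro: agree_trans agree_sym)
    qed
    also have "\<dots> = (\<Sum>k<?L. U $$ (local_index qs x, k) * V $$ (k, local_index qs y))"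
      by (rule sum.reindex_bij_witness[where i = "\<lambda>k. place n qs k x" and j = "local_index qs"])
         (auto simp: place_li[OF vs] li_place[OF vs] local_index_lt place_lt agree_place)
    also have "\<dots> = (U * V) $$ (local_index qs x, local_index qs y)"
      using U V by (subst mult_entry[OF U V]) (auto simp: local_index_lt)
    finally show ?thesis using True x y by (simp add: embed_index)
  qed
  finally show "(embed_gate n qs U * embed_gate n qs V) $$ (x,y) = embed_gate n qs (U * V) $$ (x,y)" .
qed auto


definition mk :: "nat \<Rightarrow> (nat \<Rightarrow> bool) \<Rightarrow> nat" where
  "mk n P = horner_sum of_bool 2 (map P [0..<n])"

lemma bit_mk: "bit (mk n P) i \<longleftrightarrow> i < n \<and> P i"
  unfolding mk_def by (auto simp: bit_horner_sum_bit_iff)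

lemma mk_lt: "mk n P < 2^n"
  unfolding mk_def using horner_sum_bound[of "map P [0..<n]"] by simp

lemma li_cong: "(\<forall>i\<in>set qs. bit x i = bit y i) \<Longrightarrow> local_index qs x = local_index qs y"
  unfolding local_index_def by (intro sum.cong) auto

lemma sum_agree2:
  assumes vs: "valid_support n qs" "valid_support n qs'" and dj: "set qs \<inter> set qs' = {}"
    and x: "x < 2^n" and y: "y < 2^n"
  shows "(\<Sum>z<2^n. (if agree n qs x z then f z else 0) * (if agree n qs' z y then g z else (0::complex))) =
     (if agree n (qs @ qs') x y then f (mk n (\<lambda>i. if i \<in> set qs then bit y i else bit x i)) *
        g (mk n (\<lambda>i. if i \<in> set qs then bit y i else bit x i)) else 0)"
proof -
  define w where "w = mk n (\<lambda>i. if i \<in> set qs then bit y i else bit x i)"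
  have w: "w < 2^n" unfolding w_def by (rule mk_lt)
  have "(if agree n qs x z then f z else 0) * (if agree n qs' z y then g z else (0::complex)) =
        (if z = w then (if agree n (qs @ qs') x y then f w * g w else 0) else 0)" if z: "z < 2^n" for z
  proof (cases "agree n qs x z \<and> agree n qs' z y")
    case True
    have "z = w"
    proof (rule eq_by_bits[OF z w], intro allI impI)
      fix i assume "i < n"
      then show "bit z i = bit w i" using True dj by (auto simp: agree_def w_def bit_mk)
    qed
    moreover have "agree n (qs @ qs') x y" using True by (auto simp: agree_def)
    ultimately show ?thesis using True by simp
  next
    case False
    have "\<not> (z = w \<and> agree n (qs @ qs') x y)"
    proof
      assume "z = w \<and> agree n (qs @ qs') x y"
      hence "agree n qs x z \<and> agree n qs' z y" using dj by (auto simp: agree_def w_def bit_mk)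
      with False show False by simp
    qed
    then show ?thesis using False by auto
  qed
  hence "(\<Sum>z<2^n. (if agree n qs x z then f z else 0) * (if agree n qs' z y then g z else (0::complex))) =
     (\<Sum>z<2^n. (if z = w then (if agree n (qs @ qs') x y then f w * g w else 0) else 0))"
    by (intro sum.cong) auto
  also have "\<dots> = (if agree n (qs @ qs') x y then f w * g w else 0)" using w by simp
  finally show ?thesis unfolding w_def .
qed

lemma embed_comm:
  assumes vs: "valid_support n qs" "valid_support n qs'" and dj: "set qs \<inter> set qs' = {}"
  shows "embed_gate n qs U * embed_gate n qs' V = embed_gate n qs' V * embed_gate n qs U"
proof (rule eq_matI)
  fix x y assume "x < dim_row (embed_gate n qs' V * embed_gate n qs U)" "y < dim_col (embed_gate n qs' V * embed_gate n qs U)"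
  hence x: "x < 2^n" and y: "y < 2^n" by auto
  have sq: "set qs \<subseteq> {..<n}" "set qs' \<subseteq> {..<n}" using vs by (auto simp: valid_support_def)
  define w where "w = mk n (\<lambda>i. if i \<in> set qs then bit y i else bit x i)"
  define w' where "w' = mk n (\<lambda>i. if i \<in> set qs' then bit y i else bit x i)"
  have e1: "local_index qs w = local_index qs y" unfolding w_def
    by (rule li_cong) (use sq in \<open>force simp: bit_mk\<close>)
  have e2: "local_index qs' w = local_index qs' x" unfolding w_def
    by (rule li_cong) (use sq dj in \<open>force simp: bit_mk\<close>)
  have e3: "local_index qs' w' = local_index qs' y" unfolding w'_def
    by (rule li_cong) (use sq in \<open>force simp: bit_mk\<close>)
  have e4: "local_index qs w' = local_index qs x" unfolding w'_def
    by (rule li_cong) (use sq dj in \<open>force simp: bit_mk\<close>)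
  have ag: "agree n (qs @ qs') x y = agree n (qs' @ qs) x y" by (auto simp: agree_def)
  have dj': "set qs' \<inter> set qs = {}" using dj by blast
  note s1 = sum_agree2[OF vs dj x y, of "\<lambda>z. U $$ (local_index qs x, local_index qs z)" "\<lambda>z. V $$ (local_index qs' z, local_index qs' y)"]
  note s2 = sum_agree2[OF vs(2,1) dj' x y, of "\<lambda>z. V $$ (local_index qs' x, local_index qs' z)" "\<lambda>z. U $$ (local_index qs z, local_index qs y)"]
  have "(embed_gate n qs U * embed_gate n qs' V) $$ (x,y) =
     (\<Sum>z<2^n. (if agree n qs x z then U $$ (local_index qs x, local_index qs z) else 0) *
                (if agree n qs' z y then V $$ (local_index qs' z, local_index qs' y) else 0))"
    using x y by (subst mult_entry[of _ "2^n" "2^n" _ "2^n"]) (auto simp: embed_index intro!: sum.cong)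
  also have "\<dots> = (\<Sum>z<2^n. (if agree n qs' x z then V $$ (local_index qs' x, local_index qs' z) else 0) *
                (if agree n qs z y then U $$ (local_index qs z, local_index qs y) else 0))"
    unfolding s1 s2 w_def[symmetric] w'_def[symmetric] e1 e2 e3 e4 ag by simp
  also have "\<dots> = (embed_gate n qs' V * embed_gate n qs U) $$ (x,y)"
    using x y by (subst mult_entry[of _ "2^n" "2^n" _ "2^n"]) (auto simp: embed_index intro!: sum.cong)
  finally show "(embed_gate n qs U * embed_gate n qs' V) $$ (x,y) = (embed_gate n qs' V * embed_gate n qs U) $$ (x,y)" .
qed auto

lemma embed_one: assumes vs: "valid_support n qs"
  shows "embed_gate n qs (1\<^sub>m (2 ^ length qs)) = 1\<^sub>m (2^n)"
proof (rule eq_matI)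
  fix x y assume "x < dim_row (1\<^sub>m (2^n) :: complex mat)" "y < dim_col (1\<^sub>m (2^n) :: complex mat)"
  hence x: "x < 2^n" and y: "y < 2^n" by auto
  have "agree n qs x y \<and> local_index qs x = local_index qs y \<longleftrightarrow> x = y"
  proof
    assume a: "agree n qs x y \<and> local_index qs x = local_index qs y"
    show "x = y"
    proof (rule eq_by_bits[OF x y], intro allI impI)
      fix i assume i: "i < n"
      show "bit x i = bit y i"
      proof (cases "i \<in> set qs")
        case True
        have "bit (local_index qs x) (idx qs i) = bit (local_index qs y) (idx qs i)" using a by simp
        then show ?thesis using True by (simp add: bit_local_index idx_lt idx_nth)
      next
        case False then show ?thesis using a i by (auto simp: agree_def)
      qed
    qed
  qed (auto simp: agree_def)
  then show "embed_gate n qs (1\<^sub>m (2 ^ length qs)) $$ (x,y) = 1\<^sub>m (2^n) $$ (x,y)"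
    using x y by (auto simp: embed_index local_index_lt)
qed auto

lemma cadj_carrier[simp]: "A \<in> carrier_mat m k \<Longrightarrow> cadj A \<in> carrier_mat k m"
  by (simp add: cadj_def)
lemma cadj_dims[simp]: "dim_row (cadj A) = dim_col A" "dim_col (cadj A) = dim_row A"
  by (simp_all add: cadj_def)
lemma cadj_index[simp]: "i < dim_col A \<Longrightarrow> j < dim_row A \<Longrightarrow> cadj A $$ (i,j) = cnj (A $$ (j,i))"
  by (simp add: cadj_def)

lemma cadj_cadj[simp]: "cadj (cadj A) = A"
  by (rule eq_matI) auto

lemma cadj_one[simp]: "cadj (1\<^sub>m k) = 1\<^sub>m k"
  by (rule eq_matI) auto

lemma cadj_mult: assumes "A \<in> carrier_mat m k" "B \<in> carrier_mat k l"
  shows "cadj (A * B) = cadj B * cadj A"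
proof (rule eq_matI)
  fix i j assume "i < dim_row (cadj B * cadj A)" "j < dim_col (cadj B * cadj A)"
  hence i: "i < l" and j: "j < m" using assms by auto
  show "cadj (A * B) $$ (i, j) = (cadj B * cadj A) $$ (i, j)"
  proof -
    have "cadj (A * B) $$ (i, j) = cnj (\<Sum>z<k. A $$ (j,z) * B $$ (z,i))"
      using assms i j by (simp add: mult_entry[OF assms j i])
    also have "\<dots> = (\<Sum>z<k. cadj B $$ (i,z) * cadj A $$ (z,j))"
      using assms i j by (auto simp: mult.commute intro!: sum.cong)
    also have "\<dots> = (cadj B * cadj A) $$ (i, j)"
      using assms i j by (subst mult_entry[of _ l k _ m]) auto
    finally show ?thesis .
  qed
qed (use assms in auto)

lemma cadj_smult: "cadj (c \<cdot>\<^sub>m A) = cnj c \<cdot>\<^sub>m cadj A"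
  by (rule eq_matI) auto

lemma cadj_add: "A \<in> carrier_mat m k \<Longrightarrow> B \<in> carrier_mat m k \<Longrightarrow> cadj (A + B) = cadj A + cadj B"
  by (rule eq_matI) auto

lemma cadj_embed: assumes "U \<in> carrier_mat (2 ^ length qs) (2 ^ length qs)"
  shows "cadj (embed_gate n qs U) = embed_gate n qs (cadj U)"
  by (rule eq_matI) (use assms in \<open>auto simp: embed_index local_index_lt agree_def\<close>)


definition sg :: "nat \<Rightarrow> nat \<Rightarrow> nat \<Rightarrow> complex" where
  "sg n b y = (\<Prod>j<n. if bit b j \<and> bit y j then -1 else 1)"

definition pauli :: "nat \<Rightarrow> nat \<Rightarrow> nat \<Rightarrow> complex mat" where
  "pauli n a b = mat (2^n) (2^n) (\<lambda>(x,y). if x = y XOR a then sg n b y else 0)"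

lemma pauli_carrier[simp]: "pauli n a b \<in> carrier_mat (2^n) (2^n)"
  by (simp add: pauli_def)
lemma pauli_dims[simp]: "dim_row (pauli n a b) = 2^n" "dim_col (pauli n a b) = 2^n"
  by (simp_all add: pauli_def)
lemma pauli_index: "x < 2^n \<Longrightarrow> y < 2^n \<Longrightarrow> pauli n a b $$ (x,y) = (if x = y XOR a then sg n b y else 0)"
  by (simp add: pauli_def)

lemma sg_xor: "sg n b (y XOR a) = sg n b y * sg n b a"
  unfolding sg_def by (subst prod.distrib[symmetric]) (intro prod.cong, auto simp: bit_xor_iff)
lemma sg_xor_b: "sg n (b XOR b') y = sg n b y * sg n b' y"
  unfolding sg_def by (subst prod.distrib[symmetric]) (intro prod.cong, auto simp: bit_xor_iff)
lemma sg_sq: "sg n b y * sg n b y = 1"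
  unfolding sg_def by (subst prod.distrib[symmetric]) (intro prod.neutral, auto)
lemma sg_cnj[simp]: "cnj (sg n b y) = sg n b y"
  unfolding sg_def by (induction n) auto
lemma sg_0[simp]: "sg n 0 y = 1" "sg n b 0 = 1"
  unfolding sg_def by auto
lemma sg_pm: "sg n b y = 1 \<or> sg n b y = -1"
  unfolding sg_def by (induction n) auto
lemma sg_nz[simp]: "sg n b y \<noteq> 0"
  using sg_pm[of n b y] by auto

lemma xor_xor_cancel[simp]: "((y::nat) XOR a) XOR a = y"
  by (rule bit_eqI) (auto simp: bit_xor_iff)

lemma xor_eq_iff: "((x::nat) = y XOR a) \<longleftrightarrow> (y = x XOR a)"
  by (metis xor_xor_cancel)

lemma sum_if_l: "(w::nat) < N \<Longrightarrow> (\<Sum>z<N. (if z = w then f z else 0) * g z) = f w * (g w :: complex)"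
proof -
  assume w: "w < N"
  have "(\<Sum>z<N. (if z = w then f z else 0) * g z) = (\<Sum>z<N. if z = w then f w * g w else 0)"
    by (rule sum.cong) auto
  also have "\<dots> = f w * g w" using w by simp
  finally show ?thesis .
qed

lemma sum_if_r: "(w::nat) < N \<Longrightarrow> (\<Sum>z<N. g z * (if z = w then f z else 0)) = (g w :: complex) * f w"
proof -
  assume w: "w < N"
  have "(\<Sum>z<N. g z * (if z = w then f z else 0)) = (\<Sum>z<N. if z = w then g w * f w else 0)"
    by (rule sum.cong) auto
  also have "\<dots> = g w * f w" using w by simp
  finally show ?thesis .
qed

lemma pauli_left: assumes "A \<in> carrier_mat (2^n) (2^n)" "x < 2^n" "y < 2^n" "a < 2^n"
  shows "(pauli n a b * A) $$ (x,y) = sg n b (x XOR a) * A $$ (x XOR a, y)"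
proof -
  have xa: "x XOR a < 2^n" using assms xor_lt by auto
  have "(pauli n a b * A) $$ (x,y) = (\<Sum>z<2^n. (if z = x XOR a then sg n b z else 0) * A $$ (z,y))"
    using assms by (subst mult_entry[of _ "2^n" "2^n" _ "2^n"]) (auto simp: pauli_index intro!: sum.cong dest: xor_eq_iff[THEN iffD1])
  also have "\<dots> = sg n b (x XOR a) * A $$ (x XOR a, y)" using xa by (rule sum_if_l)
  finally show ?thesis .
qed

lemma pauli_right: assumes "A \<in> carrier_mat (2^n) (2^n)" "x < 2^n" "y < 2^n" "a < 2^n"
  shows "(A * pauli n a b) $$ (x,y) = A $$ (x, y XOR a) * sg n b y"
proof -
  have ya: "y XOR a < 2^n" using assms xor_lt by auto
  have "(A * pauli n a b) $$ (x,y) = (\<Sum>z<2^n. A $$ (x,z) * (if z = y XOR a then sg n b y else 0))"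
    using assms by (subst mult_entry[of _ "2^n" "2^n" _ "2^n"]) (auto simp: pauli_index intro!: sum.cong)
  also have "\<dots> = A $$ (x, y XOR a) * sg n b y" using ya by (rule sum_if_r)
  finally show ?thesis .
qed

lemma xor_comm_assoc: "((y::nat) XOR a') XOR a = y XOR (a XOR a')"
  by (rule bit_eqI) (auto simp: bit_xor_iff)

lemma pauli_mult: assumes "a < 2^n" "a' < 2^n"
  shows "pauli n a b * pauli n a' b' = sg n b a' \<cdot>\<^sub>m pauli n (a XOR a') (b XOR b')"
proof (rule eq_matI)
  fix x y assume "x < dim_row (sg n b a' \<cdot>\<^sub>m pauli n (a XOR a') (b XOR b'))"
    "y < dim_col (sg n b a' \<cdot>\<^sub>m pauli n (a XOR a') (b XOR b'))"
  hence x: "x < 2^n" and y: "y < 2^n" by auto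
  have ya: "y XOR a' < 2^n" using assms y xor_lt by auto
  show "(pauli n a b * pauli n a' b') $$ (x,y) = (sg n b a' \<cdot>\<^sub>m pauli n (a XOR a') (b XOR b')) $$ (x,y)"
  proof -
    have L: "(pauli n a b * pauli n a' b') $$ (x,y) = pauli n a b $$ (x, y XOR a') * sg n b' y"
      using x y assms by (intro pauli_right) auto
    show ?thesis
    proof (cases "x = y XOR (a XOR a')")
      case True
      then show ?thesis unfolding L using x y ya
        by (simp add: pauli_index xor_comm_assoc sg_xor sg_xor_b)
    next
      case False
      then show ?thesis unfolding L using x y ya
        by (simp add: pauli_index xor_comm_assoc)
    qed
  qed
qed auto

lemma pauli_00: "pauli n 0 0 = 1\<^sub>m (2^n)"
  by (rule eq_matI) (auto simp: pauli_index)

lemma cadj_pauli: assumes "a < 2^n" shows "cadj (pauli n a b) = sg n b a \<cdot>\<^sub>m pauli n a b"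
proof (rule eq_matI)
  fix x y assume "x < dim_row (sg n b a \<cdot>\<^sub>m pauli n a b)" "y < dim_col (sg n b a \<cdot>\<^sub>m pauli n a b)"
  hence x: "x < 2^n" and y: "y < 2^n" by auto
  show "cadj (pauli n a b) $$ (x,y) = (sg n b a \<cdot>\<^sub>m pauli n a b) $$ (x,y)"
  proof (cases "x = y XOR a")
    case True
    hence yx: "y = x XOR a" by (simp add: xor_xor_cancel)
    have "sg n b x = sg n b a * sg n b y"
      using sg_sq[of n b a] yx by (simp add: sg_xor)
    have "cadj (pauli n a b) $$ (x,y) = sg n b x" using x y yx by (simp add: pauli_index)
    moreover have "(sg n b a \<cdot>\<^sub>m pauli n a b) $$ (x,y) = sg n b a * sg n b y" using x y True by (simp add: pauli_index)
    ultimately show ?thesis using \<open>sg n b x = sg n b a * sg n b y\<close> by simp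
  next
    case False
    hence "y \<noteq> x XOR a" using xor_xor_cancel by metis
    then show ?thesis using x y False by (simp add: pauli_index)
  qed
qed auto

definition is_pauli :: "nat \<Rightarrow> complex mat \<Rightarrow> bool" where
  "is_pauli n M \<longleftrightarrow> (\<exists>c a b. c \<noteq> 0 \<and> a < 2^n \<and> b < 2^n \<and> M = c \<cdot>\<^sub>m pauli n a b)"


definition sgf :: "nat \<Rightarrow> nat \<Rightarrow> nat \<Rightarrow> complex" where
  "sgf b y i = (if bit b i \<and> bit y i then -1 else 1)"

lemma sg_split: assumes "J \<subseteq> {..<n}"
  shows "sg n b y = (\<Prod>i\<in>J. sgf b y i) * (\<Prod>i\<in>{..<n} - J. sgf b y i)"
  unfolding sg_def sgf_def[abs_def] using prod.subset_diff[OF assms, of "\<lambda>i. if bit b i \<and> bit y i then -1 else 1"]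
  by (simp add: mult.commute)

lemma sgo_cong: "(\<And>i. i < n \<Longrightarrow> i \<notin> J \<Longrightarrow> (bit b i \<and> bit y i) = (bit b' i \<and> bit y' i)) \<Longrightarrow>
   (\<Prod>i\<in>{..<n} - J. sgf b y i) = (\<Prod>i\<in>{..<n} - J. sgf b' y' i)"
  unfolding sgf_def by (intro prod.cong) auto

definition setb :: "nat \<Rightarrow> nat \<Rightarrow> nat \<Rightarrow> bool \<Rightarrow> nat" where
  "setb n a j v = mk n (\<lambda>i. if i = j then v else bit a i)"

lemma bit_setb: "bit (setb n a j v) i \<longleftrightarrow> i < n \<and> (if i = j then v else bit a i)"
  by (simp add: setb_def bit_mk)
lemma setb_lt: "setb n a j v < 2^n" by (simp add: setb_def mk_lt)

lemma li1: "local_index [j] x = (if bit x j then 1 else 0)"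
  by (simp add: local_index_def)
lemma li2: "local_index [c,t] x = (if bit x c then 1 else 0) + 2 * (if bit x t then 1 else 0)"
  by (simp add: local_index_def numeral_2_eq_2 lessThan_Suc)

lemma hadamard_index: "i < 2 \<Longrightarrow> k < 2 \<Longrightarrow> hadamard $$ (i,k) = (if i = 1 \<and> k = 1 then - 1 / sqrt 2 else 1 / sqrt 2)"
  by (simp add: hadamard_def)
lemma phase_S_index: "i < 2 \<Longrightarrow> k < 2 \<Longrightarrow> phase_S $$ (i,k) = (if i = k then (if i = 0 then 1 else \<i>) else 0)"
  by (simp add: phase_S_def)
lemma cnot_index: "i < 4 \<Longrightarrow> k < 4 \<Longrightarrow> cnot $$ (i,k) = (if i = (if odd k then (k + 2) mod 4 else k) then 1 else 0)"
  by (simp add: cnot_def)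

lemma gate_pauli_generic: assumes vs: "valid_support n qs" and a: "a < 2^n" and a': "a' < 2^n"
  and offa: "\<And>i. i < n \<Longrightarrow> i \<notin> set qs \<Longrightarrow> bit a' i = bit a i"
  and offb: "\<And>i. i < n \<Longrightarrow> i \<notin> set qs \<Longrightarrow> bit b' i = bit b i"
  and loc: "\<And>x y. x < 2^n \<Longrightarrow> y < 2^n \<Longrightarrow>
     U $$ (local_index qs x, local_index qs (y XOR a)) * (\<Prod>i\<in>set qs. sgf b y i) =
     c * ((\<Prod>i\<in>set qs. sgf b' (x XOR a') i) * U $$ (local_index qs (x XOR a'), local_index qs y))"
  shows "embed_gate n qs U * pauli n a b = c \<cdot>\<^sub>m (pauli n a' b' * embed_gate n qs U)"
    (is "?G * _ = _")
proof (rule eq_matI)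
  fix x y assume "x < dim_row (c \<cdot>\<^sub>m (pauli n a' b' * ?G))" "y < dim_col (c \<cdot>\<^sub>m (pauli n a' b' * ?G))"
  hence x: "x < 2^n" and y: "y < 2^n" by auto
  have ya: "y XOR a < 2^n" and xa: "x XOR a' < 2^n" using x y a a' xor_lt by auto
  have L: "(?G * pauli n a b) $$ (x,y) = ?G $$ (x, y XOR a) * sg n b y"
    using x y a by (intro pauli_right) auto
  have R: "(c \<cdot>\<^sub>m (pauli n a' b' * ?G)) $$ (x,y) = c * (sg n b' (x XOR a') * ?G $$ (x XOR a', y))"
  proof -
    have R0: "(pauli n a' b' * ?G) $$ (x,y) = sg n b' (x XOR a') * ?G $$ (x XOR a', y)"
      using x y a' by (intro pauli_left) auto
    have "(c \<cdot>\<^sub>m (pauli n a' b' * ?G)) $$ (x,y) = c * (pauli n a' b' * ?G) $$ (x,y)"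
      using x y by (intro index_smult_mat) auto
    then show ?thesis unfolding R0 .
  qed
  have ag: "agree n qs x (y XOR a) = agree n qs (x XOR a') y"
    using offa by (auto simp: agree_def bit_xor_iff)
  show "(?G * pauli n a b) $$ (x,y) = (c \<cdot>\<^sub>m (pauli n a' b' * ?G)) $$ (x,y)"
  proof (cases "agree n qs x (y XOR a)")
    case False
    then show ?thesis unfolding L R using ag x y ya xa by (simp add: embed_index)
  next
    case True
    have J: "set qs \<subseteq> {..<n}" using vs by (auto simp: valid_support_def)
    have O: "(\<Prod>i\<in>{..<n} - set qs. sgf b y i) = (\<Prod>i\<in>{..<n} - set qs. sgf b' (x XOR a') i)"
      by (rule sgo_cong) (use True offa offb in \<open>auto simp: agree_def bit_xor_iff\<close>)
    have E1: "?G $$ (x, y XOR a) = U $$ (local_index qs x, local_index qs (y XOR a))"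
      using True x ya by (simp add: embed_index)
    have E2: "?G $$ (x XOR a', y) = U $$ (local_index qs (x XOR a'), local_index qs y)"
      using True ag xa y by (simp add: embed_index)
    show ?thesis unfolding L R E1 E2 sg_split[OF J, of b y] sg_split[OF J, of b' "x XOR a'"] O[symmetric]
      using loc[OF x y] by (simp add: algebra_simps)
  qed
qed auto

lemma H_pauli: assumes j: "j < n" and a: "a < 2^n" and b: "b < 2^n"
  shows "embed_gate n [j] hadamard * pauli n a b =
    (if bit a j \<and> bit b j then -1 else 1) \<cdot>\<^sub>m (pauli n (setb n a j (bit b j)) (setb n b j (bit a j)) * embed_gate n [j] hadamard)"
proof (rule gate_pauli_generic)
  show "valid_support n [j]" using j by (simp add: valid_support_def)
  fix x y :: nat
  show "hadamard $$ (local_index [j] x, local_index [j] (y XOR a)) * (\<Prod>i\<in>set [j]. sgf b y i) =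
    (if bit a j \<and> bit b j then -1 else 1) * ((\<Prod>i\<in>set [j]. sgf (setb n b j (bit a j)) (x XOR setb n a j (bit b j)) i) *
     hadamard $$ (local_index [j] (x XOR setb n a j (bit b j)), local_index [j] y))"
    using j unfolding li1 sgf_def
    by (cases "bit x j"; cases "bit y j"; cases "bit a j"; cases "bit b j")
       (simp_all add: hadamard_index bit_xor_iff bit_setb)
qed (use a in \<open>auto simp: setb_lt bit_setb\<close>)

lemma S_pauli: assumes j: "j < n" and a: "a < 2^n" and b: "b < 2^n"
  shows "embed_gate n [j] phase_S * pauli n a b =
    (if bit a j then \<i> else 1) \<cdot>\<^sub>m (pauli n a (setb n b j (bit b j \<noteq> bit a j)) * embed_gate n [j] phase_S)"
proof (rule gate_pauli_generic)
  show "valid_support n [j]" using j by (simp add: valid_support_def)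
  fix x y :: nat
  show "phase_S $$ (local_index [j] x, local_index [j] (y XOR a)) * (\<Prod>i\<in>set [j]. sgf b y i) =
    (if bit a j then \<i> else 1) * ((\<Prod>i\<in>set [j]. sgf (setb n b j (bit b j \<noteq> bit a j)) (x XOR a) i) *
     phase_S $$ (local_index [j] (x XOR a), local_index [j] y))"
    using j unfolding li1 sgf_def
    by (cases "bit x j"; cases "bit y j"; cases "bit a j"; cases "bit b j")
       (simp_all add: phase_S_index bit_xor_iff bit_setb)
qed (use a in \<open>auto simp: setb_lt bit_setb\<close>)

lemma CNOT_pauli: assumes c: "c < n" and t: "t < n" and ct: "c \<noteq> t" and a: "a < 2^n" and b: "b < 2^n"
  shows "embed_gate n [c,t] cnot * pauli n a b =
    1 \<cdot>\<^sub>m (pauli n (setb n a t (bit a t \<noteq> bit a c)) (setb n b c (bit b c \<noteq> bit b t)) * embed_gate n [c,t] cnot)"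
proof (rule gate_pauli_generic)
  show "valid_support n [c,t]" using c t ct by (simp add: valid_support_def)
  fix x y :: nat
  show "cnot $$ (local_index [c,t] x, local_index [c,t] (y XOR a)) * (\<Prod>i\<in>set [c,t]. sgf b y i) =
    1 * ((\<Prod>i\<in>set [c,t]. sgf (setb n b c (bit b c \<noteq> bit b t)) (x XOR setb n a t (bit a t \<noteq> bit a c)) i) *
     cnot $$ (local_index [c,t] (x XOR setb n a t (bit a t \<noteq> bit a c)), local_index [c,t] y))"
    using c t ct unfolding li2 sgf_def
    by (cases "bit x c"; cases "bit y c"; cases "bit a c"; cases "bit b c";
        cases "bit x t"; cases "bit y t"; cases "bit a t"; cases "bit b t")
       (simp_all add: cnot_index bit_xor_iff bit_setb)
qed (use a ct in \<open>auto simp: setb_lt bit_setb\<close>)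


lemma mult2: "U \<in> carrier_mat 2 2 \<Longrightarrow> V \<in> carrier_mat 2 2 \<Longrightarrow> i < 2 \<Longrightarrow> j < 2 \<Longrightarrow>
  (U * V) $$ (i,j) = U $$ (i,0) * V $$ (0,j) + U $$ (i,1) * V $$ (1,j)"
  by (subst mult_entry[of U 2 2 V 2]) (auto simp: numeral_2_eq_2 lessThan_Suc add.commute)

lemma mult4: "U \<in> carrier_mat 4 4 \<Longrightarrow> V \<in> carrier_mat 4 4 \<Longrightarrow> i < 4 \<Longrightarrow> j < 4 \<Longrightarrow>
  (U * V) $$ (i,j) = U $$ (i,0) * V $$ (0,j) + U $$ (i,1) * V $$ (1,j) + U $$ (i,2) * V $$ (2,j) + U $$ (i,3) * V $$ (3,j)"
  by (subst mult_entry[of U 4 4 V 4]) (auto simp: numeral_eq_Suc lessThan_Suc add.commute add.left_commute)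

lemma cases2: "(i::nat) < 2 \<Longrightarrow> (i = 0 \<Longrightarrow> P) \<Longrightarrow> (i = 1 \<Longrightarrow> P) \<Longrightarrow> P"
  by (metis One_nat_def less_2_cases)
lemma cases4: "(i::nat) < 4 \<Longrightarrow> (i = 0 \<Longrightarrow> P) \<Longrightarrow> (i = 1 \<Longrightarrow> P) \<Longrightarrow> (i = 2 \<Longrightarrow> P) \<Longrightarrow> (i = 3 \<Longrightarrow> P) \<Longrightarrow> P"
proof -
  assume "i < 4" "(i = 0 \<Longrightarrow> P)" "(i = 1 \<Longrightarrow> P)" "(i = 2 \<Longrightarrow> P)" "(i = 3 \<Longrightarrow> P)"
  moreover have "i = 0 \<or> i = 1 \<or> i = 2 \<or> i = 3" using \<open>i < 4\<close> by arith
  ultimately show P by blast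
qed

lemma hadamard_carrier[simp]: "hadamard \<in> carrier_mat 2 2" "dim_row hadamard = 2" "dim_col hadamard = 2" by (simp_all add: hadamard_def)
lemma phase_S_carrier[simp]: "phase_S \<in> carrier_mat 2 2" "dim_row phase_S = 2" "dim_col phase_S = 2" by (simp_all add: phase_S_def)
lemma cnot_carrier[simp]: "cnot \<in> carrier_mat 4 4" "dim_row cnot = 4" "dim_col cnot = 4" by (simp_all add: cnot_def)

lemma sqrt2_sq': "complex_of_real (sqrt 2) * complex_of_real (sqrt 2) = 2"
proof -
  have "sqrt 2 * sqrt 2 = (2::real)" by simp
  then have "complex_of_real (sqrt 2 * sqrt 2) = 2" by simp
  then show ?thesis by (simp only: of_real_mult)
qed

lemma sqrt2_sq: "(1 / complex_of_real (sqrt 2)) * (1 / complex_of_real (sqrt 2)) = 1/2"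
  by (simp only: times_divide_eq_left times_divide_eq_right mult_1 mult_1_right divide_divide_eq_left sqrt2_sq')

definition hh :: complex where "hh = 1 / complex_of_real (sqrt 2)"
lemma hh_cnj: "cnj hh = hh" by (simp add: hh_def)
lemma hh_sq: "hh * hh = 1/2" unfolding hh_def by (rule sqrt2_sq)
lemma hadamard_hh: "hadamard $$ (0,0) = hh" "hadamard $$ (0,Suc 0) = hh" "hadamard $$ (Suc 0,0) = hh" "hadamard $$ (Suc 0,Suc 0) = - hh"
  by (simp_all add: hadamard_index hh_def)

lemma hadamard_unit: "hadamard * cadj hadamard = 1\<^sub>m 2"
proof (rule eq_matI)
  fix i j assume "i < dim_row (1\<^sub>m 2 :: complex mat)" "j < dim_col (1\<^sub>m 2 :: complex mat)"
  hence ij: "i < 2" "j < 2" by auto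
  hence e: "(hadamard * cadj hadamard) $$ (i,j) = hadamard $$ (i,0) * cnj (hadamard $$ (j,0)) + hadamard $$ (i,1) * cnj (hadamard $$ (j,1))"
    by (subst mult2) auto
  show "(hadamard * cadj hadamard) $$ (i,j) = 1\<^sub>m 2 $$ (i,j)"
    unfolding e
    by (rule cases2[OF ij(1)]; rule cases2[OF ij(2)]; simp add: hadamard_hh hh_cnj hh_sq)
qed auto

lemma phase_S_unit: "phase_S * cadj phase_S = 1\<^sub>m 2"
proof (rule eq_matI)
  fix i j assume "i < dim_row (1\<^sub>m 2 :: complex mat)" "j < dim_col (1\<^sub>m 2 :: complex mat)"
  hence ij: "i < 2" "j < 2" by auto
  hence e: "(phase_S * cadj phase_S) $$ (i,j) = phase_S $$ (i,0) * cnj (phase_S $$ (j,0)) + phase_S $$ (i,1) * cnj (phase_S $$ (j,1))"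
    by (subst mult2) auto
  show "(phase_S * cadj phase_S) $$ (i,j) = 1\<^sub>m 2 $$ (i,j)"
    unfolding e
    by (rule cases2[OF ij(1)]; rule cases2[OF ij(2)]; simp add: phase_S_index)
qed auto

lemma cnot_unit: "cnot * cadj cnot = 1\<^sub>m 4"
proof (rule eq_matI)
  fix i j assume "i < dim_row (1\<^sub>m 4 :: complex mat)" "j < dim_col (1\<^sub>m 4 :: complex mat)"
  hence ij: "i < 4" "j < 4" by auto
  hence e: "(cnot * cadj cnot) $$ (i,j) = cnot $$ (i,0) * cnj (cnot $$ (j,0)) + cnot $$ (i,1) * cnj (cnot $$ (j,1))
     + cnot $$ (i,2) * cnj (cnot $$ (j,2)) + cnot $$ (i,3) * cnj (cnot $$ (j,3))"
    by (subst mult4) auto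
  show "(cnot * cadj cnot) $$ (i,j) = 1\<^sub>m 4 $$ (i,j)"
    unfolding e
    by (rule cases4[OF ij(1)]; rule cases4[OF ij(2)]; simp add: cnot_index)
qed auto

lemma unit_left: "U \<in> carrier_mat m m \<Longrightarrow> U * cadj U = 1\<^sub>m m \<Longrightarrow> cadj U * U = 1\<^sub>m m"
  by (rule mat_mult_left_right_inverse) auto

lemma embed_unit: assumes vs: "valid_support n qs" and U: "U \<in> carrier_mat (2 ^ length qs) (2 ^ length qs)"
  and UU: "U * cadj U = 1\<^sub>m (2 ^ length qs)"
  shows "embed_gate n qs U * cadj (embed_gate n qs U) = 1\<^sub>m (2^n)"
    "cadj (embed_gate n qs U) * embed_gate n qs U = 1\<^sub>m (2^n)"
proof -
  show "embed_gate n qs U * cadj (embed_gate n qs U) = 1\<^sub>m (2^n)"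
    using vs U UU by (simp add: cadj_embed embed_mult embed_one)
  then show "cadj (embed_gate n qs U) * embed_gate n qs U = 1\<^sub>m (2^n)"
    by (intro unit_left) auto
qed

lemma smult_smult_times: "a \<cdot>\<^sub>m (b \<cdot>\<^sub>m (A::complex mat)) = (a * b) \<cdot>\<^sub>m A"
  by (rule eq_matI) auto
lemma one_smult_m[simp]: "1 \<cdot>\<^sub>m (A::complex mat) = A"
  by (rule eq_matI) auto

lemma sm_l: "dim_col A = dim_row B \<Longrightarrow> (k \<cdot>\<^sub>m A) * B = k \<cdot>\<^sub>m (A * (B::complex mat))"
  by (rule mult_smult_assoc_mat[of _ "dim_row A" "dim_col A" _ "dim_col B"]) auto
lemma sm_r: "dim_col A = dim_row B \<Longrightarrow> A * (k \<cdot>\<^sub>m B) = k \<cdot>\<^sub>m (A * (B::complex mat))"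
  by (rule mult_smult_distrib[of _ "dim_row A" "dim_col A" _ "dim_col B"]) auto
lemma massoc: "dim_col A = dim_row B \<Longrightarrow> dim_col B = dim_row C \<Longrightarrow> (A * B) * C = A * (B * (C::complex mat))"
  by (rule assoc_mult_mat[of _ "dim_row A" "dim_col A" _ "dim_col B" _ "dim_col C"]) auto

definition cinv :: "nat \<Rightarrow> complex mat \<Rightarrow> bool" where
  "cinv n C \<longleftrightarrow> C \<in> carrier_mat (2^n) (2^n) \<and> C * cadj C = 1\<^sub>m (2^n) \<and> cadj C * C = 1\<^sub>m (2^n) \<and>
     (\<forall>M. is_pauli n M \<longrightarrow> is_pauli n (C * M * cadj C) \<and> is_pauli n (cadj C * M * C))"

lemma gen_cinv: assumes G: "G \<in> carrier_mat (2^n) (2^n)" and GG: "G * cadj G = 1\<^sub>m (2^n)"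
  and GG': "cadj G * G = 1\<^sub>m (2^n)"
  and fw: "\<And>a b. a < 2^n \<Longrightarrow> b < 2^n \<Longrightarrow> \<exists>c a' b'. c \<noteq> 0 \<and> a' < 2^n \<and> b' < 2^n \<and>
      G * pauli n a b = c \<cdot>\<^sub>m (pauli n a' b' * G)"
  and bw: "\<And>a' b'. a' < 2^n \<Longrightarrow> b' < 2^n \<Longrightarrow> \<exists>c a b. c \<noteq> 0 \<and> a < 2^n \<and> b < 2^n \<and>
      G * pauli n a b = c \<cdot>\<^sub>m (pauli n a' b' * G)"
  shows "cinv n G"
  unfolding cinv_def
proof (intro conjI allI impI G GG GG')
  fix M assume "is_pauli n M"
  then obtain k a b where k: "k \<noteq> 0" and ab: "a < 2^n" "b < 2^n" and M: "M = k \<cdot>\<^sub>m pauli n a b"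
    by (auto simp: is_pauli_def)
  have cG: "cadj G \<in> carrier_mat (2^n) (2^n)" using G by simp
  obtain c a' b' where c: "c \<noteq> 0" "a' < 2^n" "b' < 2^n" and e: "G * pauli n a b = c \<cdot>\<^sub>m (pauli n a' b' * G)"
    using fw[OF ab] by blast
  have "G * M * cadj G = k \<cdot>\<^sub>m (G * pauli n a b * cadj G)"
    using G cG unfolding M
    by (subst mult_smult_distrib[of _ "2^n" "2^n" _ "2^n"], simp, simp)
       (rule mult_smult_assoc_mat[of _ "2^n" "2^n" _ "2^n"], auto)
  also have "\<dots> = k \<cdot>\<^sub>m (c \<cdot>\<^sub>m (pauli n a' b' * G * cadj G))"
    unfolding e using G cG by (subst mult_smult_assoc_mat[of "pauli n a' b' * G" "2^n" "2^n" "cadj G" "2^n"]) auto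
  also have "pauli n a' b' * G * cadj G = pauli n a' b'"
    using G cG GG by (simp add: assoc_mult_mat[of _ "2^n" "2^n" _ "2^n" _ "2^n"])
  finally have "G * M * cadj G = (k * c) \<cdot>\<^sub>m pauli n a' b'" by (simp add: smult_smult_times)
  then show "is_pauli n (G * M * cadj G)" using k c unfolding is_pauli_def by (intro exI[of _ "k*c"] exI[of _ a'] exI[of _ b']) auto
next
  fix M assume "is_pauli n M"
  then obtain k a' b' where k: "k \<noteq> 0" and ab: "a' < 2^n" "b' < 2^n" and M: "M = k \<cdot>\<^sub>m pauli n a' b'"
    by (auto simp: is_pauli_def)
  have cG: "cadj G \<in> carrier_mat (2^n) (2^n)" using G by simp
  obtain c a b where c: "c \<noteq> 0" "a < 2^n" "b < 2^n" and e: "G * pauli n a b = c \<cdot>\<^sub>m (pauli n a' b' * G)"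
    using bw[OF ab] by blast
  have "pauli n a b = cadj G * (G * pauli n a b)"
    using G cG GG' by (simp add: assoc_mult_mat[of _ "2^n" "2^n" _ "2^n" _ "2^n", symmetric])
  also have "\<dots> = c \<cdot>\<^sub>m (cadj G * pauli n a' b' * G)"
    unfolding e using G cG by (simp add: sm_r massoc)
  finally have "(1/c) \<cdot>\<^sub>m pauli n a b = cadj G * pauli n a' b' * G"
    using c by (simp add: smult_smult_times)
  have "cadj G * M * G = k \<cdot>\<^sub>m (cadj G * pauli n a' b' * G)"
    using G cG unfolding M by (simp add: sm_l sm_r)
  also have "\<dots> = (k / c) \<cdot>\<^sub>m pauli n a b"
    unfolding \<open>(1/c) \<cdot>\<^sub>m pauli n a b = cadj G * pauli n a' b' * G\<close>[symmetric] smult_smult_times by simp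
  finally have "cadj G * M * G = (k / c) \<cdot>\<^sub>m pauli n a b" .
  then show "is_pauli n (cadj G * M * G)" using k c unfolding is_pauli_def by (intro exI[of _ "k/c"] exI[of _ a] exI[of _ b]) auto
qed


lemma H_cinv: assumes j: "j < n" shows "cinv n (embed_gate n [j] hadamard)"
proof (rule gen_cinv)
  have vs: "valid_support n [j]" using j by (simp add: valid_support_def)
  show "embed_gate n [j] hadamard * cadj (embed_gate n [j] hadamard) = 1\<^sub>m (2^n)"
    "cadj (embed_gate n [j] hadamard) * embed_gate n [j] hadamard = 1\<^sub>m (2^n)"
    using embed_unit[OF vs] hadamard_unit by auto
  fix a b :: nat assume a: "a < 2^n" and b: "b < 2^n"
  show "\<exists>c a' b'. c \<noteq> 0 \<and> a' < 2^n \<and> b' < 2^n \<and>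
      embed_gate n [j] hadamard * pauli n a b = c \<cdot>\<^sub>m (pauli n a' b' * embed_gate n [j] hadamard)"
    using H_pauli[OF j a b] by (intro exI conjI) (auto simp: setb_lt)
next
  fix a' b' :: nat assume a': "a' < 2^n" and b': "b' < 2^n"
  define a where "a = setb n a' j (bit b' j)"
  define b where "b = setb n b' j (bit a' j)"
  have e1: "setb n a j (bit b j) = a'"
    by (rule eq_by_bits[OF setb_lt a']) (use j in \<open>auto simp: a_def b_def bit_setb\<close>)
  have e2: "setb n b j (bit a j) = b'"
    by (rule eq_by_bits[OF setb_lt b']) (use j in \<open>auto simp: a_def b_def bit_setb\<close>)
  have "a < 2^n" "b < 2^n" by (simp_all add: a_def b_def setb_lt)
  then show "\<exists>c a b. c \<noteq> 0 \<and> a < 2^n \<and> b < 2^n \<and>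
      embed_gate n [j] hadamard * pauli n a b = c \<cdot>\<^sub>m (pauli n a' b' * embed_gate n [j] hadamard)"
    using H_pauli[OF j, of a b] unfolding e1 e2 by (intro exI conjI) auto
qed simp

lemma S_cinv: assumes j: "j < n" shows "cinv n (embed_gate n [j] phase_S)"
proof (rule gen_cinv)
  have vs: "valid_support n [j]" using j by (simp add: valid_support_def)
  show "embed_gate n [j] phase_S * cadj (embed_gate n [j] phase_S) = 1\<^sub>m (2^n)"
    "cadj (embed_gate n [j] phase_S) * embed_gate n [j] phase_S = 1\<^sub>m (2^n)"
    using embed_unit[OF vs] phase_S_unit by auto
  fix a b :: nat assume a: "a < 2^n" and b: "b < 2^n"
  show "\<exists>c a' b'. c \<noteq> 0 \<and> a' < 2^n \<and> b' < 2^n \<and>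
      embed_gate n [j] phase_S * pauli n a b = c \<cdot>\<^sub>m (pauli n a' b' * embed_gate n [j] phase_S)"
    using S_pauli[OF j a b] a by (intro exI conjI) (auto simp: setb_lt)
next
  fix a' b' :: nat assume a': "a' < 2^n" and b': "b' < 2^n"
  define b where "b = setb n b' j (bit b' j \<noteq> bit a' j)"
  have e2: "setb n b j (bit b j \<noteq> bit a' j) = b'"
    by (rule eq_by_bits[OF setb_lt b']) (use j in \<open>auto simp: b_def bit_setb\<close>)
  have "b < 2^n" by (simp_all add: b_def setb_lt)
  then show "\<exists>c a b. c \<noteq> 0 \<and> a < 2^n \<and> b < 2^n \<and>
      embed_gate n [j] phase_S * pauli n a b = c \<cdot>\<^sub>m (pauli n a' b' * embed_gate n [j] phase_S)"
    using S_pauli[OF j a', of b] a' unfolding e2 by (intro exI conjI) auto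
qed simp

lemma CNOT_cinv: assumes c: "c < n" and t: "t < n" and ct: "c \<noteq> t" shows "cinv n (embed_gate n [c,t] cnot)"
proof (rule gen_cinv)
  have vs: "valid_support n [c,t]" using c t ct by (simp add: valid_support_def)
  show "embed_gate n [c,t] cnot * cadj (embed_gate n [c,t] cnot) = 1\<^sub>m (2^n)"
    "cadj (embed_gate n [c,t] cnot) * embed_gate n [c,t] cnot = 1\<^sub>m (2^n)"
    using embed_unit[OF vs] cnot_unit by auto
  fix a b :: nat assume a: "a < 2^n" and b: "b < 2^n"
  show "\<exists>k a' b'. k \<noteq> 0 \<and> a' < 2^n \<and> b' < 2^n \<and>
      embed_gate n [c,t] cnot * pauli n a b = k \<cdot>\<^sub>m (pauli n a' b' * embed_gate n [c,t] cnot)"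
    using CNOT_pauli[OF c t ct a b]
    by (intro exI[of _ "1::complex"] exI[of _ "setb n a t (bit a t \<noteq> bit a c)"] exI[of _ "setb n b c (bit b c \<noteq> bit b t)"] conjI)
       (auto simp: setb_lt)
next
  fix a' b' :: nat assume a': "a' < 2^n" and b': "b' < 2^n"
  define a where "a = setb n a' t (bit a' t \<noteq> bit a' c)"
  define b where "b = setb n b' c (bit b' c \<noteq> bit b' t)"
  have e1: "setb n a t (bit a t \<noteq> bit a c) = a'"
    by (rule eq_by_bits[OF setb_lt a']) (use c t ct in \<open>auto simp: a_def bit_setb\<close>)
  have e2: "setb n b c (bit b c \<noteq> bit b t) = b'"
    by (rule eq_by_bits[OF setb_lt b']) (use c t ct in \<open>auto simp: b_def bit_setb\<close>)
  have "a < 2^n" "b < 2^n" by (simp_all add: a_def b_def setb_lt)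
  then show "\<exists>k a b. k \<noteq> 0 \<and> a < 2^n \<and> b < 2^n \<and>
      embed_gate n [c,t] cnot * pauli n a b = k \<cdot>\<^sub>m (pauli n a' b' * embed_gate n [c,t] cnot)"
    using CNOT_pauli[OF c t ct, of a b] unfolding e1 e2
    by (intro exI[of _ "1::complex"] exI[of _ a] exI[of _ b] conjI) auto
qed simp

lemma is_pauli_carrier: "is_pauli n M \<Longrightarrow> M \<in> carrier_mat (2^n) (2^n)"
  by (auto simp: is_pauli_def)

lemma cinv_one: "cinv n (1\<^sub>m (2^n))"
  unfolding cinv_def using is_pauli_carrier by fastforce

lemma cinv_mult: assumes G: "cinv n G" and C: "cinv n C" shows "cinv n (G * C)"
proof -
  have Gc: "G \<in> carrier_mat (2^n) (2^n)" and Cc: "C \<in> carrier_mat (2^n) (2^n)"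
    using G C by (auto simp: cinv_def)
  note dims = carrier_matD[OF Gc] carrier_matD[OF Cc]
  have ca: "cadj (G * C) = cadj C * cadj G" by (rule cadj_mult[OF Gc Cc])
  have u1: "G * C * cadj (G * C) = 1\<^sub>m (2^n)"
  proof -
    have "G * C * cadj (G * C) = G * ((C * cadj C) * cadj G)" unfolding ca using dims by (simp add: massoc)
    also have "\<dots> = 1\<^sub>m (2^n)" using G C dims by (simp add: cinv_def)
    finally show ?thesis .
  qed
  have u2: "cadj (G * C) * (G * C) = 1\<^sub>m (2^n)"
  proof -
    have "cadj (G * C) * (G * C) = cadj C * ((cadj G * G) * C)" unfolding ca using dims by (simp add: massoc)
    also have "\<dots> = 1\<^sub>m (2^n)" using G C dims by (simp add: cinv_def)
    finally show ?thesis .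
  qed
  have p: "is_pauli n (G * C * M * cadj (G * C)) \<and> is_pauli n (cadj (G * C) * M * (G * C))"
    if M: "is_pauli n M" for M
  proof -
    have Mc: "M \<in> carrier_mat (2^n) (2^n)" using M by (auto simp: is_pauli_def)
    note dM = carrier_matD[OF Mc]
    have "G * C * M * cadj (G * C) = G * (C * M * cadj C) * cadj G" unfolding ca using dims dM by (simp add: massoc)
    moreover have "cadj (G * C) * M * (G * C) = cadj C * (cadj G * M * G) * C" unfolding ca using dims dM by (simp add: massoc)
    ultimately show ?thesis using G C M unfolding cinv_def by metis
  qed
  show ?thesis unfolding cinv_def using Gc Cc u1 u2 p by auto
qed

lemma clifford_gate_cinv: "clifford_gate n G \<Longrightarrow> cinv n G"
  unfolding clifford_gate_def using H_cinv S_cinv CNOT_cinv by auto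

lemma clifford_cinv: "clifford_circuit n C \<Longrightarrow> cinv n C"
  by (induction rule: clifford_circuit.induct) (auto intro: cinv_one cinv_mult clifford_gate_cinv)


definition supp :: "nat \<Rightarrow> nat set \<Rightarrow> complex mat \<Rightarrow> bool" where
  "supp n S M \<longleftrightarrow> M \<in> carrier_mat (2^n) (2^n) \<and>
     (\<forall>qs U. valid_support n qs \<and> set qs \<inter> S = {} \<and> U \<in> carrier_mat (2 ^ length qs) (2 ^ length qs) \<longrightarrow>
        embed_gate n qs U * M = M * embed_gate n qs U)"

lemma supp_comm: "supp n S M \<Longrightarrow> valid_support n qs \<Longrightarrow> set qs \<inter> S = {} \<Longrightarrow>
   U \<in> carrier_mat (2 ^ length qs) (2 ^ length qs) \<Longrightarrow> embed_gate n qs U * M = M * embed_gate n qs U"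
  by (auto simp: supp_def)

lemma supp_carrier: "supp n S M \<Longrightarrow> M \<in> carrier_mat (2^n) (2^n)"
  by (auto simp: supp_def)

lemma supp_conj_gen:
  assumes sM: "supp n S M" and G: "G \<in> carrier_mat (2^n) (2^n)" and H: "H \<in> carrier_mat (2^n) (2^n)"
    and cG: "\<And>qs U. valid_support n qs \<Longrightarrow> set qs \<inter> S' = {} \<Longrightarrow> U \<in> carrier_mat (2 ^ length qs) (2 ^ length qs) \<Longrightarrow>
        embed_gate n qs U * G = G * embed_gate n qs U"
    and cH: "\<And>qs U. valid_support n qs \<Longrightarrow> set qs \<inter> S' = {} \<Longrightarrow> U \<in> carrier_mat (2 ^ length qs) (2 ^ length qs) \<Longrightarrow>
        embed_gate n qs U * H = H * embed_gate n qs U"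
    and sub: "S \<subseteq> S'"
  shows "supp n S' (G * M * H)"
  unfolding supp_def
proof (intro conjI allI impI)
  have Mc: "M \<in> carrier_mat (2^n) (2^n)" using sM supp_carrier by auto
  show "G * M * H \<in> carrier_mat (2^n) (2^n)" using G H Mc by auto
  fix qs and U :: "complex mat" assume a: "valid_support n qs \<and> set qs \<inter> S' = {} \<and> U \<in> carrier_mat (2 ^ length qs) (2 ^ length qs)"
  let ?K = "embed_gate n qs U"
  have K: "?K \<in> carrier_mat (2^n) (2^n)" by simp
  have kM: "?K * M = M * ?K" using supp_comm[OF sM] a sub by blast
  have "?K * (G * M * H) = (?K * G) * M * H" using K G Mc H by (simp add: massoc)
  also have "\<dots> = G * (?K * M) * H" unfolding cG[OF a[THEN conjunct1] a[THEN conjunct2, THEN conjunct1] a[THEN conjunct2, THEN conjunct2]]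
    using K G Mc H by (simp add: massoc)
  also have "\<dots> = G * M * (?K * H)" unfolding kM using K G Mc H by (simp add: massoc)
  also have "\<dots> = (G * M * H) * ?K" unfolding cH[OF a[THEN conjunct1] a[THEN conjunct2, THEN conjunct1] a[THEN conjunct2, THEN conjunct2]]
    using K G Mc H by (simp add: massoc)
  finally show "?K * (G * M * H) = (G * M * H) * ?K" .
qed

lemma gate_supp:
  assumes vs: "valid_support n qs" and U: "U \<in> carrier_mat (2 ^ length qs) (2 ^ length qs)"
    and UU: "U * cadj U = 1\<^sub>m (2 ^ length qs)" and sM: "supp n S M"
  shows "supp n (if set qs \<inter> S = {} then S else S \<union> set qs) (embed_gate n qs U * M * cadj (embed_gate n qs U))"
    "supp n (if set qs \<inter> S = {} then S else S \<union> set qs) (cadj (embed_gate n qs U) * M * embed_gate n qs U)"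
proof -
  let ?G = "embed_gate n qs U"
  have Mc: "M \<in> carrier_mat (2^n) (2^n)" using sM supp_carrier by auto
  have cU: "cadj U \<in> carrier_mat (2 ^ length qs) (2 ^ length qs)" using U by simp
  have cg: "cadj ?G = embed_gate n qs (cadj U)" by (rule cadj_embed[OF U])
  have u1: "?G * cadj ?G = 1\<^sub>m (2^n)" and u2: "cadj ?G * ?G = 1\<^sub>m (2^n)" using embed_unit[OF vs U UU] by auto
  have "supp n (if set qs \<inter> S = {} then S else S \<union> set qs) (?G * M * cadj ?G) \<and>
        supp n (if set qs \<inter> S = {} then S else S \<union> set qs) (cadj ?G * M * ?G)"
  proof (cases "set qs \<inter> S = {}")
    case True
    have c1: "?G * M = M * ?G" using supp_comm[OF sM vs True U] .
    have c2: "cadj ?G * M = M * cadj ?G" unfolding cg using supp_comm[OF sM vs True cU] .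
    have "?G * M * cadj ?G = M" unfolding c1 using Mc by (simp add: massoc u1)
    moreover have "cadj ?G * M * ?G = M" unfolding c2 using Mc by (simp add: massoc u2)
    ultimately show ?thesis using True sM by simp
  next
    case False
    have comm: "embed_gate n qs' V * embed_gate n qs W = embed_gate n qs W * embed_gate n qs' V"
      if "valid_support n qs'" "set qs' \<inter> (S \<union> set qs) = {}" for qs' V W
      using embed_comm[OF that(1) vs] that(2) by blast
    have "supp n (S \<union> set qs) (?G * M * cadj ?G)"
      by (rule supp_conj_gen[OF sM]) (auto simp: cg intro: comm)
    moreover have "supp n (S \<union> set qs) (cadj ?G * M * ?G)"
      by (rule supp_conj_gen[OF sM]) (auto simp: cg intro: comm)
    ultimately show ?thesis using False by simp
  qed
  then show "supp n (if set qs \<inter> S = {} then S else S \<union> set qs) (?G * M * cadj ?G)"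
    "supp n (if set qs \<inter> S = {} then S else S \<union> set qs) (cadj ?G * M * ?G)" by auto
qed


lemma layer_carrier: "layer n T L \<Longrightarrow> L \<in> carrier_mat (2^n) (2^n) \<and> finite T"
  by (induction rule: layer.induct) (auto simp: unitary_mat_def)

lemma card_ext: assumes "finite S" "set qs \<inter> S \<noteq> {}" "length qs \<le> 2"
  shows "card (S \<union> set qs) \<le> card S + 1"
proof -
  have "card (S \<union> set qs) = card S + card (set qs - S)"
    using assms(1) by (metis Un_Diff_cancel card_Un_disjoint Diff_disjoint finite_Diff2 finite_set inf_commute)
  moreover have "card (set qs - S) < card (set qs)"
    using assms(2) by (intro psubset_card_mono) auto
  moreover have "card (set qs) \<le> 2" using assms(3) card_length[of qs] by linarith
  ultimately show ?thesis by linarith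
qed

lemma card_int_split: assumes "finite S" "set qs \<inter> T = {}"
  shows "card (S \<inter> (T \<union> set qs)) = card (S \<inter> T) + card (S \<inter> set qs)"
proof -
  have "S \<inter> (T \<union> set qs) = (S \<inter> T) \<union> (S \<inter> set qs)" by blast
  moreover have "(S \<inter> T) \<inter> (S \<inter> set qs) = {}" using assms(2) by blast
  ultimately show ?thesis using assms(1) by (simp add: card_Un_disjoint)
qed

lemma card_ne_pos: "finite S \<Longrightarrow> S \<inter> set qs \<noteq> {} \<Longrightarrow> 1 \<le> card (S \<inter> set qs)"
  by (metis One_nat_def Suc_leI card_gt_0_iff finite_Int)

lemma layer_supp:
  assumes "layer n T L"
  shows "\<And>S M. finite S \<Longrightarrow> supp n S M \<Longrightarrow>
   (\<exists>S1. finite S1 \<and> S1 \<subseteq> S \<union> T \<and> card S1 \<le> card S + card (S \<inter> T) \<and> supp n S1 (L * M * cadj L)) \<and>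
   (\<exists>S1. finite S1 \<and> S1 \<subseteq> S \<union> T \<and> card S1 \<le> card S + card (S \<inter> T) \<and> supp n S1 (cadj L * M * L))"
  using assms
proof (induction rule: layer.induct)
  case layer_empty
  then show ?case using supp_carrier[OF layer_empty(2)] by auto
next
  case (layer_gate S0 L qs U)
  note IH = layer_gate.IH
  have Lc: "L \<in> carrier_mat (2^n) (2^n)" and fT: "finite S0" using layer_carrier[OF layer_gate.hyps(1)] by auto
  have U: "U \<in> carrier_mat (2 ^ length qs) (2 ^ length qs)" and UU: "U * cadj U = 1\<^sub>m (2 ^ length qs)"
    using layer_gate.hyps(6) by (auto simp: unitary_mat_def)
  let ?G = "embed_gate n qs U"
  have Gc: "?G \<in> carrier_mat (2^n) (2^n)" by simp
  have Mc: "M \<in> carrier_mat (2^n) (2^n)" using supp_carrier[OF layer_gate.prems(2)] .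
  have ca: "cadj (?G * L) = cadj L * cadj ?G" by (rule cadj_mult[OF Gc Lc])
  note dims = carrier_matD[OF Lc] carrier_matD[OF Mc]
  define ext where "ext X = (if set qs \<inter> X = {} then X else X \<union> set qs)" for X
  have fin_ext: "finite X \<Longrightarrow> finite (ext X)" for X by (simp add: ext_def)
  have card_ext': "card (ext X) \<le> card X + card (X \<inter> set qs)" if fX: "finite X" for X
  proof (cases "set qs \<inter> X = {}")
    case True then show ?thesis by (simp add: ext_def)
  next
    case False
    have "card (X \<union> set qs) \<le> card X + 1" using card_ext[OF fX False layer_gate.hyps(4)] .
    moreover have "1 \<le> card (X \<inter> set qs)" using card_ne_pos[OF fX] False by blast
    ultimately show ?thesis using False by (simp add: ext_def)
  qed
  show ?case
  proof (intro conjI)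
    obtain S1 where S1: "finite S1" "S1 \<subseteq> S \<union> S0" "card S1 \<le> card S + card (S \<inter> S0)" "supp n S1 (L * M * cadj L)"
      using IH[OF layer_gate.prems] by blast
    have sG: "supp n (ext S1) (?G * (L * M * cadj L) * cadj ?G)"
      using gate_supp(1)[OF layer_gate.hyps(2) U UU S1(4)] by (simp add: ext_def)
    have eq: "?G * L * M * cadj (?G * L) = ?G * (L * M * cadj L) * cadj ?G"
      unfolding ca using dims by (simp add: massoc)
    have c1: "card (ext S1) \<le> card S + card (S \<inter> (S0 \<union> set qs))"
    proof (cases "set qs \<inter> S1 = {}")
      case True
      then show ?thesis using S1(3) card_int_split[OF layer_gate.prems(1) layer_gate.hyps(5)] by (simp add: ext_def)
    next
      case False
      hence "S \<inter> set qs \<noteq> {}" using S1(2) layer_gate.hyps(5) by blast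
      hence "1 \<le> card (S \<inter> set qs)" using card_ne_pos layer_gate.prems(1) by blast
      then show ?thesis using False card_ext[OF S1(1) False layer_gate.hyps(4)] S1(3)
          card_int_split[OF layer_gate.prems(1) layer_gate.hyps(5)] by (simp add: ext_def)
    qed
    show "\<exists>S1. finite S1 \<and> S1 \<subseteq> S \<union> (S0 \<union> set qs) \<and> card S1 \<le> card S + card (S \<inter> (S0 \<union> set qs)) \<and>
        supp n S1 (?G * L * M * cadj (?G * L))"
      using sG c1 S1(1,2) unfolding eq by (intro exI[of _ "ext S1"]) (auto simp: ext_def fin_ext)
  next
    have sG: "supp n (ext S) (cadj ?G * M * ?G)"
      using gate_supp(2)[OF layer_gate.hyps(2) U UU layer_gate.prems(2)] by (simp add: ext_def)
    obtain S1 where S1: "finite S1" "S1 \<subseteq> ext S \<union> S0" "card S1 \<le> card (ext S) + card (ext S \<inter> S0)"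
      "supp n S1 (cadj L * (cadj ?G * M * ?G) * L)"
      using IH[OF fin_ext[OF layer_gate.prems(1)] sG] by blast
    have eq: "cadj (?G * L) * M * (?G * L) = cadj L * (cadj ?G * M * ?G) * L"
      unfolding ca using dims by (simp add: massoc)
    have i: "ext S \<inter> S0 = S \<inter> S0" using layer_gate.hyps(5) by (auto simp: ext_def)
    have c1: "card S1 \<le> card S + card (S \<inter> (S0 \<union> set qs))"
      using S1(3) card_ext'[OF layer_gate.prems(1)] card_int_split[OF layer_gate.prems(1) layer_gate.hyps(5)]
      unfolding i by linarith
    show "\<exists>S1. finite S1 \<and> S1 \<subseteq> S \<union> (S0 \<union> set qs) \<and> card S1 \<le> card S + card (S \<inter> (S0 \<union> set qs)) \<and>
        supp n S1 (cadj (?G * L) * M * (?G * L))"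
      using S1 c1 unfolding eq by (intro exI[of _ S1]) (auto simp: ext_def split: if_splits)
  qed
qed

lemma depth_carrier: "depth_circuit n d Q \<Longrightarrow> Q \<in> carrier_mat (2^n) (2^n)"
  by (induction d arbitrary: Q) (auto dest: layer_carrier)

lemma depth_supp: "depth_circuit n d Q \<Longrightarrow> finite S \<Longrightarrow> supp n S M \<Longrightarrow>
   (\<exists>S1. finite S1 \<and> card S1 \<le> 2^d * card S \<and> supp n S1 (Q * M * cadj Q)) \<and>
   (\<exists>S1. finite S1 \<and> card S1 \<le> 2^d * card S \<and> supp n S1 (cadj Q * M * Q))"
proof (induction d arbitrary: Q S M)
  case 0
  then show ?case using supp_carrier[OF 0(3)] by auto
next
  case (Suc d)
  from Suc.prems(1) obtain T L Q' where L: "layer n T L" and Q': "depth_circuit n d Q'" and Q: "Q = L * Q'" by auto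
  have Lc: "L \<in> carrier_mat (2^n) (2^n)" using layer_carrier[OF L] by auto
  have Qc: "Q' \<in> carrier_mat (2^n) (2^n)" using depth_carrier[OF Q'] .
  have Mc: "M \<in> carrier_mat (2^n) (2^n)" using supp_carrier[OF Suc.prems(3)] .
  note dims = carrier_matD[OF Lc] carrier_matD[OF Qc] carrier_matD[OF Mc]
  have ca: "cadj (L * Q') = cadj Q' * cadj L" by (rule cadj_mult[OF Lc Qc])
  have bnd: "card (X \<inter> T) \<le> card X" if "finite X" for X by (rule card_mono[OF that]) auto
  show ?case
  proof (intro conjI)
    obtain S1 where S1: "finite S1" "card S1 \<le> 2^d * card S" "supp n S1 (Q' * M * cadj Q')"
      using Suc.IH[OF Q' Suc.prems(2,3)] by blast
    obtain S2 where S2: "finite S2" "card S2 \<le> card S1 + card (S1 \<inter> T)" "supp n S2 (L * (Q' * M * cadj Q') * cadj L)"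
      using layer_supp[OF L S1(1) S1(3)] by blast
    have eq: "Q * M * cadj Q = L * (Q' * M * cadj Q') * cadj L" unfolding Q ca using dims by (simp add: massoc)
    have "card S2 \<le> 2^Suc d * card S" using S2(2) S1(2) bnd[OF S1(1)] by simp
    then show "\<exists>S1. finite S1 \<and> card S1 \<le> 2^Suc d * card S \<and> supp n S1 (Q * M * cadj Q)"
      using S2 unfolding eq by blast
  next
    obtain S1 where S1: "finite S1" "card S1 \<le> card S + card (S \<inter> T)" "supp n S1 (cadj L * M * L)"
      using layer_supp[OF L Suc.prems(2,3)] by blast
    obtain S2 where S2: "finite S2" "card S2 \<le> 2^d * card S1" "supp n S2 (cadj Q' * (cadj L * M * L) * Q')"
      using Suc.IH[OF Q' S1(1) S1(3)] by blast
    have eq: "cadj Q * M * Q = cadj Q' * (cadj L * M * L) * Q'" unfolding Q ca using dims by (simp add: massoc)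
    have "card S1 \<le> 2 * card S" using S1(2) bnd[OF Suc.prems(2)] by simp
    hence "2^d * card S1 \<le> 2^d * (2 * card S)" by (rule mult_le_mono2)
    moreover have "2^d * (2 * card S) = 2^Suc d * card S" by simp
    ultimately have "card S2 \<le> 2^Suc d * card S" using S2(2) by linarith
    then show "\<exists>S1. finite S1 \<and> card S1 \<le> 2^Suc d * card S \<and> supp n S1 (cadj Q * M * Q)"
      using S2 unfolding eq by blast
  qed
qed


definition Xm :: "complex mat" where "Xm = mat 2 2 (\<lambda>(i,k). if i = k then 0 else 1)"
definition Zm :: "complex mat" where "Zm = mat 2 2 (\<lambda>(i,k). if i = k then (if i = 0 then 1 else -1) else 0)"

lemma bit_pow2: "bit ((2::nat)^j) i \<longleftrightarrow> i = j"
  by (auto simp: bit_exp_iff)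

lemma pow2_lt: "j < n \<Longrightarrow> (2::nat)^j < 2^n" by simp

lemma sg_pow2: assumes "j < n" shows "sg n (2^j) y = (if bit y j then -1 else 1)"
proof -
  have J: "{j} \<subseteq> {..<n}" using assms by auto
  have "(\<Prod>i\<in>{..<n} - {j}. sgf (2^j) y i) = 1" by (rule prod.neutral) (auto simp: sgf_def bit_pow2)
  then show ?thesis unfolding sg_split[OF J] by (simp add: sgf_def bit_pow2)
qed

lemma sg_pow2': "j < n \<Longrightarrow> sg n b (2^j) = (if bit b j then -1 else 1)"
proof -
  assume j: "j < n"
  have J: "{j} \<subseteq> {..<n}" using j by auto
  have "(\<Prod>i\<in>{..<n} - {j}. sgf b (2^j) i) = 1" by (rule prod.neutral) (auto simp: sgf_def bit_pow2)
  then show ?thesis unfolding sg_split[OF J] by (simp add: sgf_def bit_pow2)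
qed

lemma X_embed: assumes j: "j < n" shows "pauli n (2^j) 0 = embed_gate n [j] Xm"
proof (rule eq_matI)
  fix x y assume "x < dim_row (embed_gate n [j] Xm)" "y < dim_col (embed_gate n [j] Xm)"
  hence x: "x < 2^n" and y: "y < 2^n" by auto
  have "x = y XOR 2^j \<longleftrightarrow> agree n [j] x y \<and> bit x j \<noteq> bit y j"
  proof
    assume "x = y XOR 2^j" then show "agree n [j] x y \<and> bit x j \<noteq> bit y j"
      by (auto simp: agree_def bit_xor_iff bit_pow2)
  next
    assume a: "agree n [j] x y \<and> bit x j \<noteq> bit y j"
    show "x = y XOR 2^j"
      by (rule eq_by_bits[OF x xor_lt[OF y pow2_lt[OF j]]]) (use a in \<open>auto simp: agree_def bit_xor_iff bit_pow2\<close>)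
  qed
  then show "pauli n (2^j) 0 $$ (x,y) = embed_gate n [j] Xm $$ (x,y)"
    using x y by (auto simp: pauli_index embed_index li1 Xm_def)
qed auto

lemma Z_embed: assumes j: "j < n" shows "pauli n 0 (2^j) = embed_gate n [j] Zm"
proof (rule eq_matI)
  fix x y assume "x < dim_row (embed_gate n [j] Zm)" "y < dim_col (embed_gate n [j] Zm)"
  hence x: "x < 2^n" and y: "y < 2^n" by auto
  have "x = y \<longleftrightarrow> agree n [j] x y \<and> bit x j = bit y j"
  proof
    assume a: "agree n [j] x y \<and> bit x j = bit y j"
    show "x = y" by (rule eq_by_bits[OF x y]) (use a in \<open>auto simp: agree_def\<close>)
  qed (auto simp: agree_def)
  then show "pauli n 0 (2^j) $$ (x,y) = embed_gate n [j] Zm $$ (x,y)"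
    using x y j by (auto simp: pauli_index embed_index li1 Zm_def sg_pow2)
qed auto

lemma Xm_carrier: "Xm \<in> carrier_mat (2 ^ length [j]) (2 ^ length [j])" by (simp add: Xm_def)
lemma Zm_carrier: "Zm \<in> carrier_mat (2 ^ length [j]) (2 ^ length [j])" by (simp add: Zm_def)

lemma supp_single: assumes j: "j < n" and U: "U \<in> carrier_mat (2 ^ length [j]) (2 ^ length [j])"
  shows "supp n {j} (embed_gate n [j] U)"
  unfolding supp_def
proof (intro conjI allI impI)
  fix qs and V :: "complex mat" assume a: "valid_support n qs \<and> set qs \<inter> {j} = {} \<and> V \<in> carrier_mat (2 ^ length qs) (2 ^ length qs)"
  have vs: "valid_support n [j]" using j by (simp add: valid_support_def)
  show "embed_gate n qs V * embed_gate n [j] U = embed_gate n [j] U * embed_gate n qs V"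
    using embed_comm[OF _ vs] a by auto
qed simp

lemma supp_X: "j < n \<Longrightarrow> supp n {j} (pauli n (2^j) 0)"
  using supp_single[OF _ Xm_carrier] X_embed by metis
lemma supp_Z: "j < n \<Longrightarrow> supp n {j} (pauli n 0 (2^j))"
  using supp_single[OF _ Zm_carrier] Z_embed by metis

lemma supp_X_comm: "supp n S M \<Longrightarrow> j < n \<Longrightarrow> j \<notin> S \<Longrightarrow> pauli n (2^j) 0 * M = M * pauli n (2^j) 0"
  unfolding X_embed by (rule supp_comm) (auto simp: valid_support_def Xm_def)

lemma final_contra:
  assumes M: "M = c1 \<cdot>\<^sub>m pauli n a b1 + c2 \<cdot>\<^sub>m pauli n a b2" and c: "c1 \<noteq> 0" "c2 \<noteq> 0"
    and a: "a < 2^n" and diff: "\<And>j. j < n \<Longrightarrow> bit b1 j \<noteq> bit b2 j"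
    and j: "j < n" and comm: "pauli n (2^j) 0 * M = M * pauli n (2^j) 0"
  shows False
proof -
  let ?e = "(2::nat)^j"
  have e: "?e < 2^n" using j by simp
  have ae: "a XOR ?e < 2^n" using xor_lt[OF a e] .
  have Mc: "M \<in> carrier_mat (2^n) (2^n)" unfolding M by simp
  have Me: "M $$ (x,y) = (if x = y XOR a then c1 * sg n b1 y + c2 * sg n b2 y else 0)" if "x < 2^n" "y < 2^n" for x y
    unfolding M using that by (simp add: pauli_index)
  have L: "(pauli n ?e 0 * M) $$ (a XOR ?e, 0) = M $$ (a, 0)"
    using pauli_left[OF Mc ae _ e, of 0 0] by (simp add: xor_comm_assoc)
  have R: "(M * pauli n ?e 0) $$ (a XOR ?e, 0) = M $$ (a XOR ?e, ?e)"
    using pauli_right[OF Mc ae _ e, of 0] by simp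
  have "M $$ (a, 0) = c1 + c2" using Me[OF a] by simp
  moreover have "M $$ (a XOR ?e, ?e) = c1 * sg n b1 ?e + c2 * sg n b2 ?e"
    using Me[OF ae e] by (simp add: bit_eq_iff bit_xor_iff) (metis xor_comm_assoc xor_xor_cancel bit_xor_iff)
  moreover have "sg n b2 ?e = - sg n b1 ?e" using diff[OF j] by (simp add: sg_pow2'[OF j])
  ultimately have eq: "c1 + c2 = c1 * sg n b1 ?e - c2 * sg n b1 ?e" using comm L R by simp
  show False
  proof (cases "bit b1 j")
    case True
    then show False using eq c by (simp add: sg_pow2'[OF j])
  next
    case False
    then show False using eq c by (simp add: sg_pow2'[OF j])
  qed
qed


definition om :: complex where "om = Complex (3/5) (4/5)"
definition Tm :: "complex mat" where "Tm = mat 2 2 (\<lambda>(i,k). if i = k then (if i = 0 then 1 else om) else 0)"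
definition tt :: "nat \<Rightarrow> complex" where "tt x = (if bit x 0 then om else 1)"
definition T0 :: "nat \<Rightarrow> complex mat" where "T0 n = embed_gate n [0] Tm"

lemma om_unit: "om * cnj om = 1"
  by (simp add: om_def complex_eq_iff)

lemma Tm_carrier: "Tm \<in> carrier_mat 2 2" by (simp add: Tm_def)

lemma Tm_unitary: "unitary_mat (2 ^ length [0::nat]) Tm"
  unfolding unitary_mat_def
proof (intro conjI)
  show "Tm \<in> carrier_mat (2 ^ length [0::nat]) (2 ^ length [0::nat])" by (simp add: Tm_def)
  show "Tm * cadj Tm = 1\<^sub>m (2 ^ length [0::nat])"
  proof (rule eq_matI)
    fix i j assume "i < dim_row (1\<^sub>m (2 ^ length [0::nat]) :: complex mat)" "j < dim_col (1\<^sub>m (2 ^ length [0::nat]) :: complex mat)"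
    hence ij: "i < 2" "j < 2" by auto
    hence e: "(Tm * cadj Tm) $$ (i,j) = Tm $$ (i,0) * cnj (Tm $$ (j,0)) + Tm $$ (i,1) * cnj (Tm $$ (j,1))"
      by (subst mult2) (auto simp: Tm_carrier, auto simp: Tm_def)
    show "(Tm * cadj Tm) $$ (i,j) = 1\<^sub>m (2 ^ length [0::nat]) $$ (i,j)"
      unfolding e by (rule cases2[OF ij(1)]; rule cases2[OF ij(2)]; simp add: Tm_def om_unit)
  qed (auto simp: Tm_def)
qed

lemma T0_index: assumes n: "0 < n" and x: "x < 2^n" and y: "y < 2^n"
  shows "T0 n $$ (x,y) = (if x = y then tt x else 0)"
proof (cases "x = y")
  case True then show ?thesis using x by (simp add: T0_def embed_index agree_def li1 Tm_def tt_def)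
next
  case False
  have "\<not> (agree n [0] x y \<and> bit x 0 = bit y 0)"
  proof
    assume a: "agree n [0] x y \<and> bit x 0 = bit y 0"
    have "x = y" by (rule eq_by_bits[OF x y]) (use a in \<open>auto simp: agree_def\<close>)
    with False show False by simp
  qed
  then show ?thesis using False x y by (auto simp: T0_def embed_index li1 Tm_def)
qed

lemma T0_carrier[simp]: "T0 n \<in> carrier_mat (2^n) (2^n)" by (simp add: T0_def)
lemma T0_dims[simp]: "dim_row (T0 n) = 2^n" "dim_col (T0 n) = 2^n" by (simp_all add: T0_def)

lemma diag_left: fixes A D :: "complex mat" assumes D: "D \<in> carrier_mat (2^n) (2^n)" and A: "A \<in> carrier_mat (2^n) (2^n)"
  and Di: "\<And>x y. x < 2^n \<Longrightarrow> y < 2^n \<Longrightarrow> D $$ (x,y) = (if x = y then f x else 0)"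
  and x: "x < 2^n" and y: "y < 2^n"
  shows "(D * A) $$ (x,y) = f x * A $$ (x,y)"
proof -
  have "(D * A) $$ (x,y) = (\<Sum>z<2^n. D $$ (x,z) * A $$ (z,y))" by (rule mult_entry[OF D A x y])
  also have "\<dots> = (\<Sum>z<2^n. (if z = x then f x else 0) * A $$ (z,y))"
    using x Di by (intro sum.cong) auto
  also have "\<dots> = f x * A $$ (x,y)" by (rule sum_if_l[OF x])
  finally show ?thesis .
qed

lemma diag_right: fixes A D :: "complex mat" assumes D: "D \<in> carrier_mat (2^n) (2^n)" and A: "A \<in> carrier_mat (2^n) (2^n)"
  and Di: "\<And>x y. x < 2^n \<Longrightarrow> y < 2^n \<Longrightarrow> D $$ (x,y) = (if x = y then f x else 0)"
  and x: "x < 2^n" and y: "y < 2^n"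
  shows "(A * D) $$ (x,y) = A $$ (x,y) * f y"
proof -
  have "(A * D) $$ (x,y) = (\<Sum>z<2^n. A $$ (x,z) * D $$ (z,y))" by (rule mult_entry[OF A D x y])
  also have "\<dots> = (\<Sum>z<2^n. A $$ (x,z) * (if z = y then f y else 0))"
    using y Di by (intro sum.cong) auto
  also have "\<dots> = A $$ (x,y) * f y" by (rule sum_if_r[OF y])
  finally show ?thesis .
qed

lemma sg_one: "0 < n \<Longrightarrow> sg n 1 y = (if bit y 0 then -1 else 1)"
  using sg_pow2[of 0 n y] by simp

lemma om_parts: "cnj om = 3/5 + (- \<i> * 4/5)" "om = 3/5 + (\<i> * 4/5)"
  by (simp_all add: om_def complex_eq_iff)

lemma T_conj1g: assumes n: "0 < n" and a: "a < 2^n" and b: "b < 2^n" and a0: "bit a 0" and hb: "\<And>y. sg n b' y = sg n b y * (if bit y 0 then -1 else 1)"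
  shows "cadj (T0 n) * pauli n a b * T0 n = (3/5) \<cdot>\<^sub>m pauli n a b + (- \<i> * 4/5) \<cdot>\<^sub>m pauli n a b'"
proof (rule eq_matI)
  fix x y assume "x < dim_row ((3/5) \<cdot>\<^sub>m pauli n a b + (- \<i> * 4/5) \<cdot>\<^sub>m pauli n a b')"
    "y < dim_col ((3/5) \<cdot>\<^sub>m pauli n a b + (- \<i> * 4/5) \<cdot>\<^sub>m pauli n a b')"
  hence x: "x < 2^n" and y: "y < 2^n" by auto
  have cT: "cadj (T0 n) $$ (u,v) = (if u = v then cnj (tt u) else 0)" if "u < 2^n" "v < 2^n" for u v
    using that by (subst cadj_index) (auto simp: T0_index[OF n])
  have "(cadj (T0 n) * pauli n a b * T0 n) $$ (x,y) = (cadj (T0 n) * pauli n a b) $$ (x,y) * tt y"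
    by (rule diag_right[OF T0_carrier _ T0_index[OF n] x y]) (rule mult_carrier_mat[OF cadj_carrier[OF T0_carrier] pauli_carrier])
  also have "\<dots> = cnj (tt x) * pauli n a b $$ (x,y) * tt y"
    by (subst diag_left[OF _ _ cT x y]) auto
  also have "\<dots> = ((3/5) \<cdot>\<^sub>m pauli n a b + (- \<i> * 4/5) \<cdot>\<^sub>m pauli n a b') $$ (x,y)"
  proof (cases "x = y XOR a")
    case True
    hence "bit x 0 \<longleftrightarrow> \<not> bit y 0" using a0 by (simp add: bit_xor_iff)
    note s1 = hb[of y]
    show ?thesis using \<open>bit x 0 \<longleftrightarrow> \<not> bit y 0\<close> True x y
      by (cases "bit y 0") (simp_all add: pauli_index tt_def s1 om_parts algebra_simps)
  next
    case False
    then show ?thesis using x y by (simp add: pauli_index)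
  qed
  finally show "(cadj (T0 n) * pauli n a b * T0 n) $$ (x,y) = ((3/5) \<cdot>\<^sub>m pauli n a b + (- \<i> * 4/5) \<cdot>\<^sub>m pauli n a b') $$ (x,y)" .
qed auto

lemma T_conj1: assumes n: "0 < n" and a: "a < 2^n" and b: "b < 2^n" and a0: "bit a 0"
  shows "cadj (T0 n) * pauli n a b * T0 n = (3/5) \<cdot>\<^sub>m pauli n a b + (- \<i> * 4/5) \<cdot>\<^sub>m pauli n a (b XOR 1)"
  by (rule T_conj1g[OF n a b a0]) (simp only: sg_xor_b sg_one[OF n])

lemma T_conj2g: assumes n: "0 < n" and a: "a < 2^n" and b: "b < 2^n" and a0: "bit a 0" and hb: "\<And>y. sg n b' y = sg n b y * (if bit y 0 then -1 else 1)"
  shows "T0 n * pauli n a b * cadj (T0 n) = (3/5) \<cdot>\<^sub>m pauli n a b + (\<i> * 4/5) \<cdot>\<^sub>m pauli n a b'"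
proof (rule eq_matI)
  fix x y assume "x < dim_row ((3/5) \<cdot>\<^sub>m pauli n a b + (\<i> * 4/5) \<cdot>\<^sub>m pauli n a b')"
    "y < dim_col ((3/5) \<cdot>\<^sub>m pauli n a b + (\<i> * 4/5) \<cdot>\<^sub>m pauli n a b')"
  hence x: "x < 2^n" and y: "y < 2^n" by auto
  have cT: "cadj (T0 n) $$ (u,v) = (if u = v then cnj (tt u) else 0)" if "u < 2^n" "v < 2^n" for u v
    using that by (subst cadj_index) (auto simp: T0_index[OF n])
  have "(T0 n * pauli n a b * cadj (T0 n)) $$ (x,y) = (T0 n * pauli n a b) $$ (x,y) * cnj (tt y)"
    by (rule diag_right[OF _ _ cT x y]) (auto intro: mult_carrier_mat[OF T0_carrier pauli_carrier])
  also have "\<dots> = tt x * pauli n a b $$ (x,y) * cnj (tt y)"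
    by (subst diag_left[OF T0_carrier _ T0_index[OF n] x y]) auto
  also have "\<dots> = ((3/5) \<cdot>\<^sub>m pauli n a b + (\<i> * 4/5) \<cdot>\<^sub>m pauli n a b') $$ (x,y)"
  proof (cases "x = y XOR a")
    case True
    hence "bit x 0 \<longleftrightarrow> \<not> bit y 0" using a0 by (simp add: bit_xor_iff)
    note s1 = hb[of y]
    show ?thesis using \<open>bit x 0 \<longleftrightarrow> \<not> bit y 0\<close> True x y
      by (cases "bit y 0") (simp_all add: pauli_index tt_def s1 om_parts algebra_simps)
  next
    case False
    then show ?thesis using x y by (simp add: pauli_index)
  qed
  finally show "(T0 n * pauli n a b * cadj (T0 n)) $$ (x,y) = ((3/5) \<cdot>\<^sub>m pauli n a b + (\<i> * 4/5) \<cdot>\<^sub>m pauli n a b') $$ (x,y)" .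
qed auto

lemma T_conj2: assumes n: "0 < n" and a: "a < 2^n" and b: "b < 2^n" and a0: "bit a 0"
  shows "T0 n * pauli n a b * cadj (T0 n) = (3/5) \<cdot>\<^sub>m pauli n a b + (\<i> * 4/5) \<cdot>\<^sub>m pauli n a (b XOR 1)"
  by (rule T_conj2g[OF n a b a0]) (simp only: sg_xor_b sg_one[OF n])


lemma cnot_sa: "cadj cnot = cnot"
proof (rule eq_matI)
  fix i j assume "i < dim_row cnot" "j < dim_col cnot"
  hence ij: "i < 4" "j < 4" by auto
  show "cadj cnot $$ (i,j) = cnot $$ (i,j)"
    by (rule cases4[OF ij(1)]; rule cases4[OF ij(2)]; simp add: cnot_index)
qed auto

lemma cg_sa: "cadj (embed_gate n [c,t] cnot) = embed_gate n [c,t] cnot"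
  by (simp add: cadj_embed cnot_sa)

lemma cg_sq: "valid_support n [c,t] \<Longrightarrow> embed_gate n [c,t] cnot * embed_gate n [c,t] cnot = 1\<^sub>m (2^n)"
  using embed_unit(1)[of n "[c,t]" cnot] cnot_unit by (simp add: cg_sa)

lemma cnot_conj: assumes c: "c < n" and c0: "0 < c" and b: "b < 2^n"
  shows "embed_gate n [c,0] cnot * pauli n 0 b * embed_gate n [c,0] cnot = pauli n 0 (setb n b c (bit b c \<noteq> bit b 0))"
proof -
  let ?G = "embed_gate n [c,0] cnot"
  have n: "0 < n" using c by simp
  have e0: "setb n 0 0 (bit (0::nat) 0 \<noteq> bit (0::nat) c) = 0"
    by (rule eq_by_bits[OF setb_lt]) (auto simp: bit_setb)
  have vs: "valid_support n [c,0]" using c c0 by (simp add: valid_support_def)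
  have "?G * pauli n 0 b = pauli n 0 (setb n b c (bit b c \<noteq> bit b 0)) * ?G"
    using CNOT_pauli[OF c n _ _ b, of 0] c0 e0 by simp
  hence "?G * pauli n 0 b * ?G = pauli n 0 (setb n b c (bit b c \<noteq> bit b 0)) * (?G * ?G)"
    by (simp add: massoc)
  then show ?thesis using cg_sq[OF vs] by simp
qed

fun chain :: "nat \<Rightarrow> nat \<Rightarrow> complex mat" where
  "chain n 0 = 1\<^sub>m (2^n)"
| "chain n (Suc k) = embed_gate n [Suc k, 0] cnot * chain n k"

definition rng :: "nat \<Rightarrow> nat \<Rightarrow> nat" where "rng n k = mk n (\<lambda>i. 1 \<le> i \<and> i \<le> k)"

lemma chain_carrier[simp]: "chain n k \<in> carrier_mat (2^n) (2^n)"
  by (induction k) auto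

lemma chain_clifford: "k < n \<Longrightarrow> clifford_circuit n (chain n k)"
proof (induction k)
  case 0 then show ?case by (simp add: clifford_circuit.cc_id)
next
  case (Suc k)
  have "clifford_gate n (embed_gate n [Suc k, 0] cnot)"
  proof -
    have "Suc k < n \<and> (0::nat) < n \<and> Suc k \<noteq> 0 \<and> embed_gate n [Suc k, 0] cnot = embed_gate n [Suc k, 0] cnot"
      using Suc.prems by simp
    then show ?thesis unfolding clifford_gate_def by (intro disjI2) (rule exI[of _ "Suc k"], simp, rule exI[of _ 0], simp)
  qed
  then show ?case using Suc by (auto intro: clifford_circuit.cc_step)
qed

lemma chain_conj: "k < n \<Longrightarrow> b < 2^n \<Longrightarrow>
  cadj (chain n k) * pauli n 0 b * chain n k = pauli n 0 (b XOR (if bit b 0 then rng n k else 0)) \<and>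
  chain n k * pauli n 0 b * cadj (chain n k) = pauli n 0 (b XOR (if bit b 0 then rng n k else 0))"
proof (induction k arbitrary: b)
  case 0
  have "rng n 0 = 0" by (rule eq_by_bits[of _ n]) (auto simp: rng_def bit_mk mk_lt)
  then show ?case by simp
next
  case (Suc k)
  let ?G = "embed_gate n [Suc k, 0] cnot"
  let ?C = "chain n k"
  have kn: "k < n" "Suc k < n" using Suc.prems by auto
  define b' where "b' = setb n b (Suc k) (bit b (Suc k) \<noteq> bit b 0)"
  have b': "b' < 2^n" by (simp add: b'_def setb_lt)
  have b'0: "bit b' 0 = bit b 0" using kn by (simp add: b'_def bit_setb)
  have ca: "cadj (?G * ?C) = cadj ?C * ?G" using cadj_mult[of ?G "2^n" "2^n" ?C "2^n"] by (simp add: cg_sa)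
  have Cc: "?C \<in> carrier_mat (2^n) (2^n)" by simp
  note dims = carrier_matD[OF Cc]
  have e1: "cadj (?G * ?C) * pauli n 0 b * (?G * ?C) = cadj ?C * (?G * pauli n 0 b * ?G) * ?C"
    unfolding ca using dims by (simp add: massoc)
  have G1: "?G * pauli n 0 b * ?G = pauli n 0 b'" unfolding b'_def by (rule cnot_conj[OF kn(2) _ Suc.prems(2)]) simp
  have r1: "b' XOR (if bit b' 0 then rng n k else 0) = b XOR (if bit b 0 then rng n (Suc k) else 0)"
    by (rule eq_by_bits[OF xor_lt[OF b'] xor_lt[OF Suc.prems(2)]])
       (use kn in \<open>auto simp: b'_def bit_setb rng_def bit_mk bit_xor_iff mk_lt\<close>)
  define b'' where "b'' = b XOR (if bit b 0 then rng n k else 0)"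
  have b'': "b'' < 2^n" unfolding b''_def by (rule xor_lt[OF Suc.prems(2)]) (auto simp: rng_def mk_lt)
  have e2: "(?G * ?C) * pauli n 0 b * cadj (?G * ?C) = ?G * (?C * pauli n 0 b * cadj ?C) * ?G"
    unfolding ca using dims by (simp add: massoc)
  have G2: "?G * pauli n 0 b'' * ?G = pauli n 0 (setb n b'' (Suc k) (bit b'' (Suc k) \<noteq> bit b'' 0))"
    by (rule cnot_conj[OF kn(2) _ b'']) simp
  have r2: "setb n b'' (Suc k) (bit b'' (Suc k) \<noteq> bit b'' 0) = b XOR (if bit b 0 then rng n (Suc k) else 0)"
    by (rule eq_by_bits[OF setb_lt xor_lt[OF Suc.prems(2)]])
       (use kn in \<open>auto simp: b''_def bit_setb rng_def bit_mk bit_xor_iff mk_lt\<close>)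
  show ?case
  proof
    show "cadj (chain n (Suc k)) * pauli n 0 b * chain n (Suc k) = pauli n 0 (b XOR (if bit b 0 then rng n (Suc k) else 0))"
      using e1 G1 Suc.IH[OF kn(1) b'] r1 by simp
    show "chain n (Suc k) * pauli n 0 b * cadj (chain n (Suc k)) = pauli n 0 (b XOR (if bit b 0 then rng n (Suc k) else 0))"
      using e2 Suc.IH[OF kn(1) Suc.prems(2)] G2 r2 unfolding b''_def by simp
  qed
qed

lemma bit1: "bit (1::nat) j \<longleftrightarrow> j = 0" using bit_pow2[of 0 j] by simp
lemma bit1': "bit (Suc 0) j \<longleftrightarrow> j = 0" using bit1 by simp

lemma zall: assumes n: "0 < n" shows "\<And>j. j < n \<Longrightarrow> bit ((1::nat) XOR rng n (n - 1)) j"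
proof -
  fix j assume j: "j < n"
  have r: "bit (rng n (n - 1)) j \<longleftrightarrow> 1 \<le> j" using j by (auto simp: rng_def bit_mk)
  show "bit ((1::nat) XOR rng n (n - 1)) j"
    unfolding bit_xor_iff bit1 r by (cases "j = 0") simp_all
qed


lemma cinv_adj: "cinv n C \<Longrightarrow> cinv n (cadj C)"
  unfolding cinv_def by auto

lemma is_pauli_I: "a < 2^n \<Longrightarrow> b < 2^n \<Longrightarrow> is_pauli n (pauli n a b)"
  unfolding is_pauli_def by (intro exI[of _ 1] exI[of _ a] exI[of _ b]) auto

lemma pauli_nz: assumes "a < 2^n" shows "pauli n a b $$ (a, 0) = 1"
  using assms by (simp add: pauli_index)

lemma xor0[simp]: "(0::nat) XOR a = a" "a XOR (0::nat) = a" by simp_all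

lemma anti_X: assumes j: "j < n" and aw: "aw < 2^n" and bj: "bit bw j"
  shows "pauli n (2^j) 0 * pauli n aw bw = (-1) \<cdot>\<^sub>m (pauli n aw bw * pauli n (2^j) 0)"
proof -
  have e: "(2::nat)^j < 2^n" using j by simp
  have "pauli n (2^j) 0 * pauli n aw bw = pauli n (2^j XOR aw) bw"
    using pauli_mult[OF e aw, of 0 bw] by simp
  moreover have "pauli n aw bw * pauli n (2^j) 0 = (-1) \<cdot>\<^sub>m pauli n (aw XOR 2^j) bw"
    using pauli_mult[OF aw e, of bw 0] sg_pow2'[OF j, of bw] bj by simp
  moreover have "(2::nat)^j XOR aw = aw XOR 2^j" by (simp add: xor.commute)
  ultimately show ?thesis by (simp add: smult_smult_times)
qed

lemma anti_Z: assumes j: "j < n" and aw: "aw < 2^n" and aj: "bit aw j"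
  shows "pauli n 0 (2^j) * pauli n aw bw = (-1) \<cdot>\<^sub>m (pauli n aw bw * pauli n 0 (2^j))"
proof -
  have z: "(0::nat) < 2^n" by simp
  have "pauli n 0 (2^j) * pauli n aw bw = (-1) \<cdot>\<^sub>m pauli n aw (2^j XOR bw)"
    using pauli_mult[OF z aw, of "2^j" bw] sg_pow2[OF j, of aw] aj by simp
  moreover have "pauli n aw bw * pauli n 0 (2^j) = pauli n aw (bw XOR 2^j)"
    using pauli_mult[OF aw z, of bw "2^j"] by simp
  moreover have "(2::nat)^j XOR bw = bw XOR 2^j" by (simp add: xor.commute)
  ultimately show ?thesis by (simp add: smult_smult_times)
qed

lemma nz_bit: "(a::nat) \<noteq> 0 \<Longrightarrow> a < 2^n \<Longrightarrow> \<exists>j<n. bit a j"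
proof (rule ccontr)
  assume a: "a \<noteq> 0" "a < 2^n" "\<not> (\<exists>j<n. bit a j)"
  have "a = 0" by (rule eq_by_bits[OF a(2), of 0]) (use a(3) in auto)
  with a(1) show False by simp
qed

lemma choose_sigma: assumes n: "0 < n" and E: "cinv n E"
  shows "\<exists>j<n. \<exists>\<sigma>. (\<sigma> = pauli n (2^j) 0 \<or> \<sigma> = pauli n 0 (2^j)) \<and>
     (\<exists>k a b. k \<noteq> 0 \<and> a < 2^n \<and> b < 2^n \<and> bit a 0 \<and> E * \<sigma> * cadj E = k \<cdot>\<^sub>m pauli n a b)"
proof -
  let ?Z = "pauli n 0 1"
  have Ec: "E \<in> carrier_mat (2^n) (2^n)" and EE: "E * cadj E = 1\<^sub>m (2^n)" and EE': "cadj E * E = 1\<^sub>m (2^n)"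
    and Ep: "\<And>M. is_pauli n M \<Longrightarrow> is_pauli n (E * M * cadj E) \<and> is_pauli n (cadj E * M * E)"
    using E unfolding cinv_def by auto
  note dims = carrier_matD[OF Ec]
  have one: "(1::nat) < 2^n" using one_less_power[of "2::nat" n] n by simp
  have zero: "(0::nat) < 2^n" by simp
  define W where "W = cadj E * ?Z * E"
  have "is_pauli n W" unfolding W_def using Ep is_pauli_I[OF zero one] by blast
  then obtain kw aw bw where kw: "kw \<noteq> 0" and awb: "aw < 2^n" "bw < 2^n" and W: "W = kw \<cdot>\<^sub>m pauli n aw bw"
    unfolding is_pauli_def by blast
  have EW2: "E * W = ?Z * E"
  proof -
    have "E * W = (E * cadj E) * ?Z * E" unfolding W_def using dims by (simp add: massoc)
    then show ?thesis using EE by simp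
  qed
  have WE: "W * cadj E = cadj E * ?Z"
  proof -
    have "W * cadj E = cadj E * ?Z * (E * cadj E)" unfolding W_def using dims by (simp add: massoc)
    then show ?thesis using EE dims by simp
  qed
  have nz: "aw \<noteq> 0 \<or> bw \<noteq> 0"
  proof (rule ccontr)
    assume "\<not> (aw \<noteq> 0 \<or> bw \<noteq> 0)"
    hence "W = kw \<cdot>\<^sub>m 1\<^sub>m (2^n)" using W by (simp add: pauli_00)
    hence "?Z * E = kw \<cdot>\<^sub>m E" using EW2 dims by (simp add: sm_r)
    hence "?Z * E * cadj E = kw \<cdot>\<^sub>m (E * cadj E)" using dims by (simp add: sm_l)
    hence Zk: "?Z = kw \<cdot>\<^sub>m 1\<^sub>m (2^n)" using EE dims by (simp add: massoc)
    have "?Z $$ (0,0) = 1" by (simp add: pauli_index)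
    moreover have "?Z $$ (1,1) = -1" using one sg_one[OF n, of 1] by (simp add: pauli_index bit1')
    ultimately show False using Zk one by simp
  qed
  obtain j \<sigma> where j: "j < n" and \<sigma>: "\<sigma> = pauli n (2^j) 0 \<or> \<sigma> = pauli n 0 (2^j)"
    and anti: "\<sigma> * pauli n aw bw = (-1) \<cdot>\<^sub>m (pauli n aw bw * \<sigma>)"
  proof (cases "bw \<noteq> 0")
    case True
    then obtain j where "j < n" "bit bw j" using nz_bit awb by blast
    then show ?thesis using that anti_X awb by blast
  next
    case False
    hence "aw \<noteq> 0" using nz by simp
    then obtain j where "j < n" "bit aw j" using nz_bit awb by blast
    then show ?thesis using that anti_Z awb by blast
  qed
  have \<sigma>c: "\<sigma> \<in> carrier_mat (2^n) (2^n)" using \<sigma> by auto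
  have \<sigma>p: "is_pauli n \<sigma>" using \<sigma> j is_pauli_I[of _ n] by auto
  have antiW: "\<sigma> * W = (-1) \<cdot>\<^sub>m (W * \<sigma>)"
    unfolding W using \<sigma>c anti by (simp add: sm_l sm_r smult_smult_times mult.commute)
  define B where "B = E * \<sigma> * cadj E"
  have "is_pauli n B" unfolding B_def using Ep[OF \<sigma>p] by blast
  then obtain kb a b where kb: "kb \<noteq> 0" and ab: "a < 2^n" "b < 2^n" and B: "B = kb \<cdot>\<^sub>m pauli n a b"
    unfolding is_pauli_def by blast
  note dims2 = carrier_matD[OF \<sigma>c]
  have antiB: "B * ?Z = (-1) \<cdot>\<^sub>m (?Z * B)"
  proof -
    have "B * ?Z = E * \<sigma> * (cadj E * ?Z)" unfolding B_def using dims dims2 by (simp add: massoc)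
    also have "\<dots> = E * (\<sigma> * W) * cadj E" unfolding WE[symmetric] using dims dims2 W by (simp add: massoc)
    also have "\<dots> = (-1) \<cdot>\<^sub>m (E * W * \<sigma> * cadj E)" unfolding antiW using dims dims2 W by (simp add: massoc sm_l sm_r)
    also have "\<dots> = (-1) \<cdot>\<^sub>m (?Z * B)" unfolding EW2 B_def using dims dims2 by (simp add: massoc)
    finally show ?thesis .
  qed
  have a0: "bit a 0"
  proof (rule ccontr)
    assume na: "\<not> bit a 0"
    have "kb \<cdot>\<^sub>m (pauli n a b * ?Z) = (-1) \<cdot>\<^sub>m (kb \<cdot>\<^sub>m (?Z * pauli n a b))"
      using antiB unfolding B by (simp add: sm_l sm_r)
    hence "(1/kb) \<cdot>\<^sub>m (kb \<cdot>\<^sub>m (pauli n a b * ?Z)) = (1/kb) \<cdot>\<^sub>m ((-1) \<cdot>\<^sub>m (kb \<cdot>\<^sub>m (?Z * pauli n a b)))"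
      by simp
    hence e: "pauli n a b * ?Z = (-1) \<cdot>\<^sub>m (?Z * pauli n a b)" using kb by (simp add: smult_smult_times)
    have p1: "pauli n a b * ?Z = pauli n a (b XOR 1)" using pauli_mult[OF ab(1) zero, of b 1] by simp
    have p2: "?Z * pauli n a b = pauli n a (b XOR 1)"
      using pauli_mult[OF zero ab(1), of 1 b] sg_one[OF n, of a] na by (simp add: xor.commute)
    have "pauli n a (b XOR 1) $$ (a, 0) = - (pauli n a (b XOR 1) $$ (a, 0))"
      using e ab(1) unfolding p1 p2 by (metis index_smult_mat(1) mult_minus1 pauli_dims(1) pauli_dims(2) zero)
    then show False using pauli_nz[OF ab(1)] by simp
  qed
  show ?thesis using j \<sigma> kb ab a0 B unfolding B_def by blast
qed


lemma pZ: "a < 2^n \<Longrightarrow> pauli n a b * pauli n 0 1 = pauli n a (b XOR 1)"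
  using pauli_mult[of a n 0 b 1] by simp

lemma mult_add_r: "dim_col A = dim_row X \<Longrightarrow> X \<in> carrier_mat k m \<Longrightarrow> Y \<in> carrier_mat k m \<Longrightarrow>
   A * (X + Y) = A * X + A * (Y :: complex mat)"
  by (rule mult_add_distrib_mat[of _ "dim_row A" k]) auto
lemma mult_add_l: "X \<in> carrier_mat k m \<Longrightarrow> Y \<in> carrier_mat k m \<Longrightarrow> m = dim_row B \<Longrightarrow>
   (X + Y) * B = X * B + Y * (B :: complex mat)"
  by (rule add_mult_distrib_mat[of _ k m]) auto

lemma core:
  assumes n: "0 < n" and Dc: "D \<in> carrier_mat (2^n) (2^n)" and DD: "D * cadj D = 1\<^sub>m (2^n)"
    and Dp: "\<And>M. is_pauli n M \<Longrightarrow> is_pauli n (cadj D * M * D)"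
    and DZ: "cadj D * pauli n 0 1 * D = pauli n 0 z" and zb: "\<And>j. j < n \<Longrightarrow> bit z j"
    and ab: "a < 2^n" "b < 2^n" and c: "c1 \<noteq> 0" "c2 \<noteq> 0"
    and sM: "supp n S (cadj D * (c1 \<cdot>\<^sub>m pauli n a b + c2 \<cdot>\<^sub>m (pauli n a b * pauli n 0 1)) * D)"
    and fS: "finite S" and cS: "card S < n"
  shows False
proof -
  let ?P = "pauli n a b" and ?Z = "pauli n 0 1"
  note dims = carrier_matD[OF Dc]
  obtain k1 a1 b1 where k1: "k1 \<noteq> 0" and a1: "a1 < 2^n" "b1 < 2^n" and e1: "cadj D * ?P * D = k1 \<cdot>\<^sub>m pauli n a1 b1"
    using Dp[OF is_pauli_I[OF ab]] unfolding is_pauli_def by blast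
  have e2: "cadj D * (?P * ?Z) * D = k1 \<cdot>\<^sub>m pauli n a1 (b1 XOR z)"
  proof -
    have "cadj D * (?P * ?Z) * D = (cadj D * ?P * D) * (cadj D * ?Z * D)"
    proof -
      have "(cadj D * ?P * D) * (cadj D * ?Z * D) = cadj D * ?P * (D * cadj D) * ?Z * D"
        using dims by (simp add: massoc)
      then show ?thesis using DD dims by (simp add: massoc)
    qed
    also have "\<dots> = k1 \<cdot>\<^sub>m (pauli n a1 b1 * pauli n 0 z)" unfolding e1 DZ by (simp add: sm_l)
    also have "pauli n a1 b1 * pauli n 0 z = pauli n a1 (b1 XOR z)" using pauli_mult[OF a1(1), of 0 b1 z] by simp
    finally show ?thesis .
  qed
  have eM: "cadj D * (c1 \<cdot>\<^sub>m ?P + c2 \<cdot>\<^sub>m (?P * ?Z)) * D =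
      (c1 * k1) \<cdot>\<^sub>m pauli n a1 b1 + (c2 * k1) \<cdot>\<^sub>m pauli n a1 (b1 XOR z)"
  proof -
    have "cadj D * (c1 \<cdot>\<^sub>m ?P + c2 \<cdot>\<^sub>m (?P * ?Z)) * D = (cadj D * (c1 \<cdot>\<^sub>m ?P) + cadj D * (c2 \<cdot>\<^sub>m (?P * ?Z))) * D"
      using dims by (subst mult_add_r[of _ _ "2^n" "2^n"]) auto
    also have "\<dots> = cadj D * (c1 \<cdot>\<^sub>m ?P) * D + cadj D * (c2 \<cdot>\<^sub>m (?P * ?Z)) * D"
      using dims by (subst mult_add_l[of _ "2^n" "2^n"]) auto
    also have "\<dots> = c1 \<cdot>\<^sub>m (cadj D * ?P * D) + c2 \<cdot>\<^sub>m (cadj D * (?P * ?Z) * D)"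
      using dims by (simp add: sm_l sm_r)
    also have "\<dots> = (c1 * k1) \<cdot>\<^sub>m pauli n a1 b1 + (c2 * k1) \<cdot>\<^sub>m pauli n a1 (b1 XOR z)"
      unfolding e1 e2 by (simp add: smult_smult_times)
    finally show ?thesis .
  qed
  have "\<not> {..<n} \<subseteq> S"
  proof
    assume "{..<n} \<subseteq> S"
    hence "card {..<n} \<le> card S" by (rule card_mono[OF fS])
    with cS show False by simp
  qed
  then obtain j where j: "j < n" "j \<notin> S" by auto
  have comm: "pauli n (2^j) 0 * ((c1 * k1) \<cdot>\<^sub>m pauli n a1 b1 + (c2 * k1) \<cdot>\<^sub>m pauli n a1 (b1 XOR z)) =
      ((c1 * k1) \<cdot>\<^sub>m pauli n a1 b1 + (c2 * k1) \<cdot>\<^sub>m pauli n a1 (b1 XOR z)) * pauli n (2^j) 0"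
    using supp_X_comm[OF sM j] unfolding eM .
  show False
  proof (rule final_contra[OF refl _ _ a1(1) _ j(1) comm])
    show "c1 * k1 \<noteq> 0" "c2 * k1 \<noteq> 0" using c k1 by simp_all
    fix i assume "i < n"
    then show "bit b1 i \<noteq> bit (b1 XOR z) i" using zb by (simp add: bit_xor_iff)
  qed
qed


definition Lq :: "nat \<Rightarrow> complex mat" where
  "Lq n = (if n = 0 then 1\<^sub>m (2^n) else embed_gate n [0] Tm * 1\<^sub>m (2^n))"
definition Qd :: "nat \<Rightarrow> complex mat" where "Qd n = Lq n * 1\<^sub>m (2^n)"
definition F1 :: "nat \<Rightarrow> complex mat" where "F1 n = Qd n * chain n (n - 1)"
definition F2 :: "nat \<Rightarrow> complex mat" where "F2 n = chain n (n - 1) * Qd n"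

lemma Lq_layer: "\<exists>S. layer n S (Lq n)"
proof (cases "n = 0")
  case True
  have "layer n {} (1\<^sub>m (2^n))" by (rule layer.layer_empty)
  then show ?thesis using True by (auto simp: Lq_def)
next
  case False
  have Tu: "unitary_mat 2 Tm" using Tm_unitary by simp
  have "layer n ({} \<union> set [0]) (embed_gate n [0] Tm * 1\<^sub>m (2^n))"
    by (rule layer.layer_gate[OF layer.layer_empty]) (use False Tu in \<open>auto simp: valid_support_def\<close>)
  then show ?thesis using False by (auto simp: Lq_def)
qed

lemma Qd_depth: "depth_circuit n 1 (Qd n)"
  using Lq_layer[of n] by (auto simp: Qd_def)

lemma Qd_T: "0 < n \<Longrightarrow> Qd n = T0 n"
  by (simp add: Qd_def Lq_def T0_def)

lemma chain_cl: "clifford_circuit n (chain n (n - 1))"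
proof (cases "n = 0")
  case True
  have "clifford_circuit n (1\<^sub>m (2^n))" by (rule clifford_circuit.cc_id)
  then show ?thesis using True by simp
next
  case False then show ?thesis by (intro chain_clifford) simp
qed

lemma F1_CQ: "F1 \<in> A_CQ_1"
  unfolding A_CQ_1_def F1_def using Qd_depth chain_cl by blast

lemma F2_QC: "F2 \<in> A_QC_1"
  unfolding A_QC_1_def F2_def using Qd_depth chain_cl by blast

lemma smult_add_distrib: "A \<in> carrier_mat m k \<Longrightarrow> B \<in> carrier_mat m k \<Longrightarrow>
   c \<cdot>\<^sub>m (x \<cdot>\<^sub>m A + y \<cdot>\<^sub>m B) = (c * x) \<cdot>\<^sub>m A + (c * y) \<cdot>\<^sub>m (B :: complex mat)"
  by (rule eq_matI) (auto simp: algebra_simps)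

lemma DZ_chain: assumes n: "0 < n"
  shows "cadj (chain n (n - 1)) * pauli n 0 1 * chain n (n - 1) = pauli n 0 (1 XOR rng n (n - 1))"
    "chain n (n - 1) * pauli n 0 1 * cadj (chain n (n - 1)) = pauli n 0 (1 XOR rng n (n - 1))"
proof -
  have one: "(1::nat) < 2^n" using one_less_power[of "2::nat" n] n by simp
  have b: "bit (1::nat) 0" by (simp add: bit1 bit1')
  show "cadj (chain n (n - 1)) * pauli n 0 1 * chain n (n - 1) = pauli n 0 (1 XOR rng n (n - 1))"
    using chain_conj[of "n - 1" n 1] n one b by simp
  show "chain n (n - 1) * pauli n 0 1 * cadj (chain n (n - 1)) = pauli n 0 (1 XOR rng n (n - 1))"
    using chain_conj[of "n - 1" n 1] n one b by simp
qed

lemma z_lt: "(1::nat) XOR rng n (n - 1) < 2^n" if "0 < n"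
proof (rule xor_lt)
  show "(1::nat) < 2^n" using one_less_power[of "2::nat" n] that by simp
  show "rng n (n - 1) < 2^n" by (simp add: rng_def mk_lt)
qed

lemma cadj_mult': "dim_col A = dim_row B \<Longrightarrow> cadj (A * B) = cadj B * cadj A"
  by (rule cadj_mult[of _ "dim_row A" "dim_col A" _ "dim_col B"]) auto

lemma F1_not_QC: "F1 \<notin> A_QC_1"
proof
  assume "F1 \<in> A_QC_1"
  then obtain d where H: "\<And>n. \<exists>C Q. clifford_circuit n C \<and> depth_circuit n d Q \<and> F1 n = C * Q"
    unfolding A_QC_1_def by blast
  define n where "n = 2^d + (1::nat)"
  have n: "0 < n" by (simp add: n_def)
  obtain C1 Q1 where C1: "clifford_circuit n C1" and Q1: "depth_circuit n d Q1" and F: "F1 n = C1 * Q1"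
    using H by blast
  let ?C0 = "chain n (n - 1)"
  have i1: "cinv n C1" by (rule clifford_cinv[OF C1])
  have i0: "cinv n ?C0" by (rule clifford_cinv[OF chain_cl])
  have C1c: "C1 \<in> carrier_mat (2^n) (2^n)" and C1u: "cadj C1 * C1 = 1\<^sub>m (2^n)" using i1 by (auto simp: cinv_def)
  have C0c: "?C0 \<in> carrier_mat (2^n) (2^n)" and C0u: "?C0 * cadj ?C0 = 1\<^sub>m (2^n)"
    and C0p: "\<And>M. is_pauli n M \<Longrightarrow> is_pauli n (cadj ?C0 * M * ?C0)" using i0 by (auto simp: cinv_def)
  have Q1c: "Q1 \<in> carrier_mat (2^n) (2^n)" by (rule depth_carrier[OF Q1])
  note dims = carrier_matD[OF C1c] carrier_matD[OF C0c] carrier_matD[OF Q1c]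
  have eqF: "T0 n * ?C0 = C1 * Q1" using F Qd_T[OF n] by (simp add: F1_def)
  have Q1e: "Q1 = cadj C1 * T0 n * ?C0"
  proof -
    have "cadj C1 * (C1 * Q1) = (cadj C1 * C1) * Q1" using dims by (simp add: massoc)
    then have "cadj C1 * (C1 * Q1) = Q1" using C1u dims by simp
    then show ?thesis unfolding eqF[symmetric] using dims by (simp add: massoc)
  qed
  obtain j \<sigma> k a b where j: "j < n" and \<sigma>: "\<sigma> = pauli n (2^j) 0 \<or> \<sigma> = pauli n 0 (2^j)"
    and k: "k \<noteq> 0" and ab: "a < 2^n" "b < 2^n" "bit a 0" and B: "C1 * \<sigma> * cadj C1 = k \<cdot>\<^sub>m pauli n a b"
    using choose_sigma[OF n i1] by blast
  have s\<sigma>: "supp n {j} \<sigma>" using \<sigma> supp_X[OF j] supp_Z[OF j] by auto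
  have \<sigma>c: "\<sigma> \<in> carrier_mat (2^n) (2^n)" using \<sigma> by auto
  note dims2 = carrier_matD[OF \<sigma>c]
  obtain S1 where S1: "finite S1" "card S1 \<le> 2^d * card {j}" "supp n S1 (cadj Q1 * \<sigma> * Q1)"
    using depth_supp[OF Q1 _ s\<sigma>] by blast
  have cq: "cadj Q1 = cadj ?C0 * cadj (T0 n) * C1"
    unfolding Q1e using dims by (simp add: cadj_mult' massoc)
  have "cadj Q1 * \<sigma> * Q1 = cadj ?C0 * (cadj (T0 n) * (C1 * \<sigma> * cadj C1) * T0 n) * ?C0"
    unfolding cq using dims dims2 by (subst Q1e) (simp add: massoc)
  also have "\<dots> = cadj ?C0 * (k \<cdot>\<^sub>m (cadj (T0 n) * pauli n a b * T0 n)) * ?C0"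
    unfolding B by (simp add: sm_l sm_r)
  also have "\<dots> = cadj ?C0 * ((k * (3/5)) \<cdot>\<^sub>m pauli n a b + (k * (- \<i> * 4/5)) \<cdot>\<^sub>m (pauli n a b * pauli n 0 1)) * ?C0"
    unfolding T_conj1[OF n ab] pZ[OF ab(1)] by (subst smult_add_distrib) auto
  finally have sM: "supp n S1 (cadj ?C0 * ((k * (3/5)) \<cdot>\<^sub>m pauli n a b + (k * (- \<i> * 4/5)) \<cdot>\<^sub>m (pauli n a b * pauli n 0 1)) * ?C0)"
    using S1(3) by simp
  have cS: "card S1 < n" using S1(2) by (simp add: n_def)
  show False
    by (rule core[OF n C0c C0u C0p DZ_chain(1)[OF n] zall[OF n] ab(1,2) _ _ sM S1(1) cS]) (use k in auto)
qed

lemma F2_not_CQ: "F2 \<notin> A_CQ_1"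
proof
  assume "F2 \<in> A_CQ_1"
  then obtain d where H: "\<And>n. \<exists>C Q. clifford_circuit n C \<and> depth_circuit n d Q \<and> F2 n = Q * C"
    unfolding A_CQ_1_def by blast
  define n where "n = 2^d + (1::nat)"
  have n: "0 < n" by (simp add: n_def)
  obtain C1 Q1 where C1: "clifford_circuit n C1" and Q1: "depth_circuit n d Q1" and F: "F2 n = Q1 * C1"
    using H by blast
  let ?C0 = "chain n (n - 1)"
  have i1: "cinv n C1" by (rule clifford_cinv[OF C1])
  have i1': "cinv n (cadj C1)" by (rule cinv_adj[OF i1])
  have i0: "cinv n ?C0" by (rule clifford_cinv[OF chain_cl])
  have C1c: "C1 \<in> carrier_mat (2^n) (2^n)" and C1u: "C1 * cadj C1 = 1\<^sub>m (2^n)" using i1 by (auto simp: cinv_def)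
  have C0c: "?C0 \<in> carrier_mat (2^n) (2^n)" and C0u: "cadj ?C0 * ?C0 = 1\<^sub>m (2^n)"
    and C0p: "\<And>M. is_pauli n M \<Longrightarrow> is_pauli n (?C0 * M * cadj ?C0)" using i0 by (auto simp: cinv_def)
  have Q1c: "Q1 \<in> carrier_mat (2^n) (2^n)" by (rule depth_carrier[OF Q1])
  note dims = carrier_matD[OF C1c] carrier_matD[OF C0c] carrier_matD[OF Q1c]
  have eqF: "?C0 * T0 n = Q1 * C1" using F Qd_T[OF n] by (simp add: F2_def)
  have Q1e: "Q1 = ?C0 * T0 n * cadj C1"
  proof -
    have "(Q1 * C1) * cadj C1 = Q1 * (C1 * cadj C1)" using dims by (simp add: massoc)
    then have "(Q1 * C1) * cadj C1 = Q1" using C1u dims by simp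
    then show ?thesis unfolding eqF[symmetric] by simp
  qed
  obtain j \<sigma> k a b where j: "j < n" and \<sigma>: "\<sigma> = pauli n (2^j) 0 \<or> \<sigma> = pauli n 0 (2^j)"
    and k: "k \<noteq> 0" and ab: "a < 2^n" "b < 2^n" "bit a 0" and B: "cadj C1 * \<sigma> * cadj (cadj C1) = k \<cdot>\<^sub>m pauli n a b"
    using choose_sigma[OF n i1'] by blast
  have s\<sigma>: "supp n {j} \<sigma>" using \<sigma> supp_X[OF j] supp_Z[OF j] by auto
  have \<sigma>c: "\<sigma> \<in> carrier_mat (2^n) (2^n)" using \<sigma> by auto
  note dims2 = carrier_matD[OF \<sigma>c]
  obtain S1 where S1: "finite S1" "card S1 \<le> 2^d * card {j}" "supp n S1 (Q1 * \<sigma> * cadj Q1)"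
    using depth_supp[OF Q1 _ s\<sigma>] by blast
  have cq: "cadj Q1 = C1 * cadj (T0 n) * cadj ?C0"
    unfolding Q1e using dims by (simp add: cadj_mult' massoc)
  have "Q1 * \<sigma> * cadj Q1 = ?C0 * (T0 n * (cadj C1 * \<sigma> * C1) * cadj (T0 n)) * cadj ?C0"
    unfolding cq using dims dims2 by (subst Q1e) (simp add: massoc)
  also have "\<dots> = ?C0 * (k \<cdot>\<^sub>m (T0 n * pauli n a b * cadj (T0 n))) * cadj ?C0"
    using B by (simp add: sm_l sm_r)
  also have "\<dots> = ?C0 * ((k * (3/5)) \<cdot>\<^sub>m pauli n a b + (k * (\<i> * 4/5)) \<cdot>\<^sub>m (pauli n a b * pauli n 0 1)) * cadj ?C0"
    unfolding T_conj2[OF n ab] pZ[OF ab(1)] by (subst smult_add_distrib) auto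
  finally have sM: "supp n S1 (cadj (cadj ?C0) * ((k * (3/5)) \<cdot>\<^sub>m pauli n a b + (k * (\<i> * 4/5)) \<cdot>\<^sub>m (pauli n a b * pauli n 0 1)) * cadj ?C0)"
    using S1(3) by simp
  have cS: "card S1 < n" using S1(2) by (simp add: n_def)
  have DD: "cadj ?C0 * cadj (cadj ?C0) = 1\<^sub>m (2^n)" using C0u by simp
  have Dp: "\<And>M. is_pauli n M \<Longrightarrow> is_pauli n (cadj (cadj ?C0) * M * cadj ?C0)" using C0p by simp
  have DZ: "cadj (cadj ?C0) * pauli n 0 1 * cadj ?C0 = pauli n 0 (1 XOR rng n (n - 1))" using DZ_chain(2)[OF n] by simp
  show False
    by (rule core[OF n _ DD Dp DZ zall[OF n] ab(1,2) _ _ sM S1(1) cS]) (use k C0c in auto)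
qed

theorem theorem1p2:
  shows "\<not> A_CQ_1 \<subseteq> A_QC_1 \<and> \<not> A_QC_1 \<subseteq> A_CQ_1"
  using F1_CQ F1_not_QC F2_QC F2_not_CQ by blast


end
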